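(* Let $G$ be a digraph and $\mathbb F$ a field, and for sheaves $\mathcal F$ of finite-dimensional $\mathbb F$-vector spaces on $G$ put $\alpha_1(\mathcal F)={\rm m.e.}(\mathcal F)$ and $\alpha_0(\mathcal F)=\chi(\mathcal F)+{\rm m.e.}(\mathcal F)$. Then $\alpha_0,\alpha_1$ take non-negative values; $\alpha_i(\mathcal F_1\oplus\mathcal F_2)=\alpha_i(\mathcal F_1)+\alpha_i(\mathcal F_2)$ for $i=0,1$; and for every short exact sequence $0\to\mathcal F_1\to\mathcal F_2\to\mathcal F_3\to0$ of sheaves on $G$ the sequence $$0,\ \alpha_1(\mathcal F_1),\ \alpha_1(\mathcal F_2),\ \alpha_1(\mathcal F_3),\ \alpha_0(\mathcal F_1),\ \alpha_0(\mathcal F_2),\ \alpha_0(\mathcal F_3),\ 0$$ is triangular, i.e. each term other than the first and last is at most the sum of its two neighbours. (That is, the maximum excess is a first quasi-Betti number.)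
   Context: Digraphs (finite, multiple edges and loops allowed) and sheaves $\mathcal F$ on them: finite-dimensional $\mathbb F$-vector spaces $\mathcal F(P)$, $P\in V_G\sqcup E_G$, with linear maps $\mathcal F(t,e)\colon\mathcal F(e)\to\mathcal F(t_Ge)$, $\mathcal F(h,e)\colon\mathcal F(e)\to\mathcal F(h_Ge)$. $\mathcal F(V)=\bigoplus_v\mathcal F(v)$, $\mathcal F(E)=\bigoplus_e\mathcal F(e)$, $\chi(\mathcal F)=\dim\mathcal F(V)-\dim\mathcal F(E)$; $d_h,d_t\colon\mathcal F(E)\to\mathcal F(V)$ send the summand $\mathcal F(e)$ into $\mathcal F(h_Ge)$, resp. $\mathcal F(t_Ge)$, via the restriction maps. For a subspace $U\subset\mathcal F(V)$, $\Gamma_{\rm ht}(U)=\bigoplus_{e}\{w\in\mathcal F(e):d_hw\in U,\ d_tw\in U\}$, ${\rm excess}(\mathcal F,U)=\dim\Gamma_{\rm ht}(U)-\dim U$, ${\rm m.e.}(\mathcal F)=\max_U{\rm excess}(\mathcal F,U)$. A morphism of sheaves $\alpha\colon\mathcal F\to\mathcal G$ is a family of linear maps $\alpha_P\colon\mathcal F(P)\to\mathcal G(P)$ with $\mathcal G(t,e)\alpha_e=\alpha_{te}\mathcal F(t,e)$ and $\mathcal G(h,e)\alpha_e=\alpha_{he}\mathcal F(h,e)$; direct sums are taken valuewise, and a sequence of sheaves is exact iff it is exact at every $P\in V_G\sqcup E_G$. *)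

theory Defs
  imports Complex_Main "HOL-Library.Function_Algebras" "Graph_Theory.Digraph"
begin

text \<open>A finite-dimensional F-vector space of dimension n is modelled as
  F^n = functions nat => F vanishing from index n on.  A linear map F^n -> F^m
  is given by a matrix M (entries M i j, i < m, j < n).\<close>

definition cspace :: "nat \<Rightarrow> (nat \<Rightarrow> 'a::zero) set" where
  "cspace n = {x. \<forall>i\<ge>n. x i = 0}"

definition lin :: "nat \<Rightarrow> nat \<Rightarrow> (nat \<Rightarrow> nat \<Rightarrow> 'a::comm_ring) \<Rightarrow> (nat \<Rightarrow> 'a) \<Rightarrow> (nat \<Rightarrow> 'a)" where
  "lin m n M x = (\<lambda>i. if i < m then (\<Sum>j<n. M i j * x j) else 0)"

definition fscale :: "'a::field \<Rightarrow> ('b \<Rightarrow> nat \<Rightarrow> 'a) \<Rightarrow> ('b \<Rightarrow> nat \<Rightarrow> 'a)" where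
  "fscale c x = (\<lambda>b i. c * x b i)"

abbreviation fdim :: "('b \<Rightarrow> nat \<Rightarrow> 'a::field) set \<Rightarrow> nat" where
  "fdim S \<equiv> vector_space.dim fscale S"

abbreviation fsubspace :: "('b \<Rightarrow> nat \<Rightarrow> 'a::field) set \<Rightarrow> bool" where
  "fsubspace S \<equiv> module.subspace fscale S"

text \<open>A sheaf: F(v) = F^(sv v), F(e) = F^(se e), restriction maps
  F(t,e) : F(e) -> F(tail e) with matrix st e and F(h,e) : F(e) -> F(head e)
  with matrix sh e.\<close>

record ('v,'e,'a) sheaf =
  sv :: "'v \<Rightarrow> nat"
  se :: "'e \<Rightarrow> nat"
  st :: "'e \<Rightarrow> nat \<Rightarrow> nat \<Rightarrow> 'a"
  sh :: "'e \<Rightarrow> nat \<Rightarrow> nat \<Rightarrow> 'a"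

definition resT :: "('v,'e) pre_digraph \<Rightarrow> ('v,'e,'a::comm_ring) sheaf \<Rightarrow> 'e \<Rightarrow> (nat \<Rightarrow> 'a) \<Rightarrow> (nat \<Rightarrow> 'a)" where
  "resT G F e = lin (sv F (tail G e)) (se F e) (st F e)"

definition resH :: "('v,'e) pre_digraph \<Rightarrow> ('v,'e,'a::comm_ring) sheaf \<Rightarrow> 'e \<Rightarrow> (nat \<Rightarrow> 'a) \<Rightarrow> (nat \<Rightarrow> 'a)" where
  "resH G F e = lin (sv F (head G e)) (se F e) (sh F e)"

definition secV :: "('v,'e) pre_digraph \<Rightarrow> ('v,'e,'a::field) sheaf \<Rightarrow> ('v \<Rightarrow> nat \<Rightarrow> 'a) set" where
  "secV G F = {x. \<forall>v. (v \<in> verts G \<longrightarrow> x v \<in> cspace (sv F v)) \<and> (v \<notin> verts G \<longrightarrow> x v = 0)}"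

definition secE :: "('v,'e) pre_digraph \<Rightarrow> ('v,'e,'a::field) sheaf \<Rightarrow> ('e \<Rightarrow> nat \<Rightarrow> 'a) set" where
  "secE G F = {x. \<forall>e. (e \<in> arcs G \<longrightarrow> x e \<in> cspace (se F e)) \<and> (e \<notin> arcs G \<longrightarrow> x e = 0)}"

definition euler_char :: "('v,'e) pre_digraph \<Rightarrow> ('v,'e,'a) sheaf \<Rightarrow> int" where
  "euler_char G F = int (\<Sum>v\<in>verts G. sv F v) - int (\<Sum>e\<in>arcs G. se F e)"

definition d_h :: "('v,'e) pre_digraph \<Rightarrow> ('v,'e,'a::field) sheaf \<Rightarrow> ('e \<Rightarrow> nat \<Rightarrow> 'a) \<Rightarrow> ('v \<Rightarrow> nat \<Rightarrow> 'a)" where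
  "d_h G F x = (\<lambda>v. if v \<in> verts G then (\<Sum>e\<in>{e\<in>arcs G. head G e = v}. resH G F e (x e)) else 0)"

definition d_t :: "('v,'e) pre_digraph \<Rightarrow> ('v,'e,'a::field) sheaf \<Rightarrow> ('e \<Rightarrow> nat \<Rightarrow> 'a) \<Rightarrow> ('v \<Rightarrow> nat \<Rightarrow> 'a)" where
  "d_t G F x = (\<lambda>v. if v \<in> verts G then (\<Sum>e\<in>{e\<in>arcs G. tail G e = v}. resT G F e (x e)) else 0)"

definition emb :: "'e \<Rightarrow> (nat \<Rightarrow> 'a::zero) \<Rightarrow> ('e \<Rightarrow> nat \<Rightarrow> 'a)" where
  "emb e w = (\<lambda>e'. if e' = e then w else 0)"

definition gamma_ht :: "('v,'e) pre_digraph \<Rightarrow> ('v,'e,'a::field) sheaf \<Rightarrow> ('v \<Rightarrow> nat \<Rightarrow> 'a) set \<Rightarrow> ('e \<Rightarrow> nat \<Rightarrow> 'a) set" where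
  "gamma_ht G F U = {x \<in> secE G F. \<forall>e\<in>arcs G. d_h G F (emb e (x e)) \<in> U \<and> d_t G F (emb e (x e)) \<in> U}"

definition excess :: "('v,'e) pre_digraph \<Rightarrow> ('v,'e,'a::field) sheaf \<Rightarrow> ('v \<Rightarrow> nat \<Rightarrow> 'a) set \<Rightarrow> int" where
  "excess G F U = int (fdim (gamma_ht G F U)) - int (fdim U)"

definition max_excess :: "('v,'e) pre_digraph \<Rightarrow> ('v,'e,'a::field) sheaf \<Rightarrow> int" where
  "max_excess G F = Max {excess G F U | U. fsubspace U \<and> U \<subseteq> secV G F}"

definition alpha1 :: "('v,'e) pre_digraph \<Rightarrow> ('v,'e,'a::field) sheaf \<Rightarrow> int" where
  "alpha1 G F = max_excess G F"

definition alpha0 :: "('v,'e) pre_digraph \<Rightarrow> ('v,'e,'a::field) sheaf \<Rightarrow> int" where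
  "alpha0 G F = euler_char G F + max_excess G F"

definition blockdiag :: "nat \<Rightarrow> nat \<Rightarrow> (nat \<Rightarrow> nat \<Rightarrow> 'a::zero) \<Rightarrow> (nat \<Rightarrow> nat \<Rightarrow> 'a) \<Rightarrow> (nat \<Rightarrow> nat \<Rightarrow> 'a)" where
  "blockdiag m1 n1 A B = (\<lambda>i j. if i < m1 \<and> j < n1 then A i j
      else if m1 \<le> i \<and> n1 \<le> j then B (i - m1) (j - n1) else 0)"

definition sheaf_sum :: "('v,'e) pre_digraph \<Rightarrow> ('v,'e,'a::zero) sheaf \<Rightarrow> ('v,'e,'a) sheaf \<Rightarrow> ('v,'e,'a) sheaf" where
  "sheaf_sum G F1 F2 =
     \<lparr> sv = (\<lambda>v. sv F1 v + sv F2 v),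
       se = (\<lambda>e. se F1 e + se F2 e),
       st = (\<lambda>e. blockdiag (sv F1 (tail G e)) (se F1 e) (st F1 e) (st F2 e)),
       sh = (\<lambda>e. blockdiag (sv F1 (head G e)) (se F1 e) (sh F1 e) (sh F2 e)) \<rparr>"

record ('v,'e,'a) sheaf_mor =
  mor_v :: "'v \<Rightarrow> nat \<Rightarrow> nat \<Rightarrow> 'a"
  mor_e :: "'e \<Rightarrow> nat \<Rightarrow> nat \<Rightarrow> 'a"

definition morV :: "('v,'e,'a::comm_ring) sheaf \<Rightarrow> ('v,'e,'a) sheaf \<Rightarrow> ('v,'e,'a) sheaf_mor \<Rightarrow> 'v \<Rightarrow> (nat \<Rightarrow> 'a) \<Rightarrow> (nat \<Rightarrow> 'a)" where
  "morV F H a v = lin (sv H v) (sv F v) (mor_v a v)"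

definition morE :: "('v,'e,'a::comm_ring) sheaf \<Rightarrow> ('v,'e,'a) sheaf \<Rightarrow> ('v,'e,'a) sheaf_mor \<Rightarrow> 'e \<Rightarrow> (nat \<Rightarrow> 'a) \<Rightarrow> (nat \<Rightarrow> 'a)" where
  "morE F H a e = lin (se H e) (se F e) (mor_e a e)"

definition is_sheaf_mor :: "('v,'e) pre_digraph \<Rightarrow> ('v,'e,'a::field) sheaf \<Rightarrow> ('v,'e,'a) sheaf \<Rightarrow> ('v,'e,'a) sheaf_mor \<Rightarrow> bool" where
  "is_sheaf_mor G F H a \<longleftrightarrow>
     (\<forall>e\<in>arcs G. \<forall>w\<in>cspace (se F e).
        resT G H e (morE F H a e w) = morV F H a (tail G e) (resT G F e w) \<and>
        resH G H e (morE F H a e w) = morV F H a (head G e) (resH G F e w))"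

definition short_exact_lin :: "nat \<Rightarrow> nat \<Rightarrow> nat \<Rightarrow> ((nat \<Rightarrow> 'a::field) \<Rightarrow> (nat \<Rightarrow> 'a)) \<Rightarrow> ((nat \<Rightarrow> 'a) \<Rightarrow> (nat \<Rightarrow> 'a)) \<Rightarrow> bool" where
  "short_exact_lin n1 n2 n3 A B \<longleftrightarrow>
     inj_on A (cspace n1) \<and>
     A ` cspace n1 = {y \<in> cspace n2. B y = 0} \<and>
     B ` cspace n2 = cspace n3"

definition short_exact :: "('v,'e) pre_digraph \<Rightarrow> ('v,'e,'a::field) sheaf \<Rightarrow> ('v,'e,'a) sheaf \<Rightarrow> ('v,'e,'a) sheaf
     \<Rightarrow> ('v,'e,'a) sheaf_mor \<Rightarrow> ('v,'e,'a) sheaf_mor \<Rightarrow> bool" where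
  "short_exact G F1 F2 F3 a b \<longleftrightarrow>
     is_sheaf_mor G F1 F2 a \<and> is_sheaf_mor G F2 F3 b \<and>
     (\<forall>v\<in>verts G. short_exact_lin (sv F1 v) (sv F2 v) (sv F3 v) (morV F1 F2 a v) (morV F2 F3 b v)) \<and>
     (\<forall>e\<in>arcs G. short_exact_lin (se F1 e) (se F2 e) (se F3 e) (morE F1 F2 a e) (morE F2 F3 b e))"

definition triangular :: "int list \<Rightarrow> bool" where
  "triangular xs \<longleftrightarrow> (\<forall>i. 0 < i \<and> i + 1 < length xs \<longrightarrow> xs ! i \<le> xs ! (i - 1) + xs ! (i + 1))"

end

theory Submission
  imports Defs
begin

lemma vs_fscale: "vector_space (fscale :: 'a::field \<Rightarrow> ('b \<Rightarrow> nat \<Rightarrow> 'a) \<Rightarrow> _)"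
  unfolding vector_space_def module_def fscale_def
  by (auto simp: fun_eq_iff algebra_simps)

global_interpretation FS: vector_space "fscale :: 'a::field \<Rightarrow> ('b \<Rightarrow> nat \<Rightarrow> 'a) \<Rightarrow> _"
  by (rule vs_fscale)

abbreviation flin :: "(('b \<Rightarrow> nat \<Rightarrow> 'a::field) \<Rightarrow> ('c \<Rightarrow> nat \<Rightarrow> 'a)) \<Rightarrow> bool" where
  "flin f \<equiv> Vector_Spaces.linear fscale fscale f"

lemma flinI:
  fixes f :: "('b \<Rightarrow> nat \<Rightarrow> 'a::field) \<Rightarrow> ('c \<Rightarrow> nat \<Rightarrow> 'a)"
  assumes "\<And>x y. f (x + y) = f x + f y" "\<And>c x. f (fscale c x) = fscale c (f x)"
  shows "flin f"
  using assms by (auto simp: Vector_Spaces.linear_iff intro: vs_fscale)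

lemma flinD:
  fixes f :: "('b \<Rightarrow> nat \<Rightarrow> 'a::field) \<Rightarrow> ('c \<Rightarrow> nat \<Rightarrow> 'a)"
  assumes "flin f"
  shows "f (x + y) = f x + f y" "f (fscale c x) = fscale c (f x)" "f 0 = 0"
proof -
  interpret L: Vector_Spaces.linear fscale fscale f by fact
  show "f (x + y) = f x + f y" "f (fscale c x) = fscale c (f x)" "f 0 = 0"
    by (simp_all add: L.add L.scale)
qed

definition fd :: "('b \<Rightarrow> nat \<Rightarrow> 'a::field) set \<Rightarrow> bool" where
  "fd S \<longleftrightarrow> (\<exists>C. finite C \<and> S \<subseteq> FS.span C)"

lemma fd_basis:
  assumes "fd S"
  obtains B where "finite B" "B \<subseteq> S" "FS.independent B" "S \<subseteq> FS.span B" "card B = FS.dim S"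
proof -
  obtain B where B: "B \<subseteq> S" "FS.independent B" "S \<subseteq> FS.span B" "card B = FS.dim S"
    using FS.basis_exists by blast
  from assms obtain C where C: "finite C" "S \<subseteq> FS.span C" unfolding fd_def by blast
  have "finite B" using FS.independent_span_bound[OF C(1) B(2)] B(1) C(2) by blast
  then show ?thesis using that B by blast
qed

lemma fd_subset: "fd S \<Longrightarrow> T \<subseteq> S \<Longrightarrow> fd T" unfolding fd_def by blast

lemma dim_mono_fd:
  assumes "fd S" "T \<subseteq> S" shows "FS.dim T \<le> FS.dim S"
proof -
  obtain B where B: "finite B" "B \<subseteq> S" "FS.independent B" "S \<subseteq> FS.span B" "card B = FS.dim S"
    using fd_basis[OF assms(1)] by blast
  obtain BT where BT: "BT \<subseteq> T" "FS.independent BT" "T \<subseteq> FS.span BT" "card BT = FS.dim T"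
    using FS.basis_exists by blast
  have "card BT \<le> card B" using FS.independent_span_bound[OF B(1) BT(2)] BT(1) assms(2) B(4) by blast
  then show ?thesis using B BT by simp
qed

lemma dim_zero: "FS.dim {0} = 0"
  using FS.dim_eq_card[of "{}" "{0}"] FS.independent_empty by simp

lemma fd_image:
  assumes "flin f" "fd S" shows "fd (f ` S)"
proof -
  interpret L: Vector_Spaces.linear fscale fscale f by fact
  from assms(2) obtain C where C: "finite C" "S \<subseteq> FS.span C" unfolding fd_def by blast
  then have "f ` S \<subseteq> FS.span (f ` C)" using L.span_image by blast
  then show ?thesis using C(1) unfolding fd_def by blast
qed

lemma span_disj_zero:
  assumes "FS.independent B" "finite B" "A1 \<subseteq> B" "A2 \<subseteq> B" "A1 \<inter> A2 = {}"
    "x \<in> FS.span A1" "x \<in> FS.span A2"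
  shows "x = 0"
proof -
  have f1: "finite A1" "finite A2" using assms(2-4) finite_subset by blast+
  obtain u where u: "(\<Sum>v\<in>A1. fscale (u v) v) = x" using assms(6) FS.span_finite[OF f1(1)] by auto
  obtain w where w: "(\<Sum>v\<in>A2. fscale (w v) v) = x" using assms(7) FS.span_finite[OF f1(2)] by auto
  define g where "g v = (if v \<in> A1 then u v else - w v)" for v
  have "(\<Sum>v\<in>A1 \<union> A2. fscale (g v) v) = (\<Sum>v\<in>A1. fscale (g v) v) + (\<Sum>v\<in>A2. fscale (g v) v)"
    using f1 assms(5) by (rule sum.union_disjoint)
  also have "(\<Sum>v\<in>A1. fscale (g v) v) = x" using u by (simp add: g_def)
  also have "(\<Sum>v\<in>A2. fscale (g v) v) = (\<Sum>v\<in>A2. - fscale (w v) v)"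
    using assms(5) by (intro sum.cong) (auto simp: g_def FS.scale_minus_left)
  also have "\<dots> = - x" using w by (simp add: sum_negf)
  finally have "(\<Sum>v\<in>A1 \<union> A2. fscale (g v) v) = x + - x" .
  then have "(\<Sum>v\<in>A1 \<union> A2. fscale (g v) v) = 0" by (simp only: right_minus)
  then have "\<forall>v\<in>A1. g v = 0" using FS.independentD[OF assms(1), of "A1 \<union> A2" g] assms f1 by auto
  then show ?thesis using u g_def by simp
qed

lemma rank_nullity:
  assumes lf: "flin f" and S: "FS.subspace S" "fd S"
  shows "FS.dim S = FS.dim (f ` S) + FS.dim {x\<in>S. f x = 0}"
proof -
  interpret L: Vector_Spaces.linear fscale fscale f by fact
  define K where "K = {x\<in>S. f x = 0}"
  have "K = S \<inter> {x. f x = 0}" by (auto simp: K_def)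
  then have Ksub: "FS.subspace K"
    using FS.subspace_inter[OF S(1) L.subspace_kernel] by simp
  obtain BK where BK: "BK \<subseteq> K" "FS.independent BK" "K \<subseteq> FS.span BK" "card BK = FS.dim K"
    using FS.basis_exists by blast
  have "BK \<subseteq> S" using BK(1) K_def by auto
  then obtain B where B: "BK \<subseteq> B" "B \<subseteq> S" "FS.independent B" "S \<subseteq> FS.span B"
    using FS.maximal_independent_subset_extend[OF _ BK(2)] by blast
  obtain C0 where C0: "finite C0" "S \<subseteq> FS.span C0" using S(2) unfolding fd_def by blast
  have finB: "finite B" using FS.independent_span_bound[OF C0(1) B(3)] B(2) C0(2) by blast
  have dimS: "FS.dim S = card B" using FS.basis_card_eq_dim[OF B(2) B(4) B(3)] by simp
  define C where "C = B - BK"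
  have spanC_S: "FS.span C \<subseteq> S" using FS.span_minimal[of C S] B(2) S(1) C_def by auto
  have spanBK_K: "FS.span BK \<subseteq> K" using FS.span_minimal[OF BK(1) Ksub] .
  have inj0: "\<forall>x\<in>FS.span C. f x = 0 \<longrightarrow> x = 0"
  proof (intro ballI impI)
    fix x assume x: "x \<in> FS.span C" "f x = 0"
    then have "x \<in> K" using spanC_S K_def by auto
    then have "x \<in> FS.span BK" using BK(3) by auto
    then show "x = 0" using span_disj_zero[OF B(3) finB B(1), of C x] x C_def by auto
  qed
  have injC: "inj_on f (FS.span C)" using L.inj_on_iff_eq_0[OF FS.subspace_span] inj0 by blast
  have indC: "FS.independent (f ` C)"
    using L.independent_injective_image[OF _ injC] FS.independent_mono[OF B(3)] C_def by auto
  have cardfC: "card (f ` C) = card C" using card_image inj_on_subset[OF injC FS.span_superset] by blast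
  have fCS: "f ` C \<subseteq> f ` S" using B(2) C_def by auto
  have fS_span: "f ` S \<subseteq> FS.span (f ` C)"
  proof
    fix y assume "y \<in> f ` S" then obtain x where x: "x \<in> S" "y = f x" by auto
    have "B = BK \<union> C" using B(1) C_def by auto
    then have "x \<in> FS.span (BK \<union> C)" using x B(4) by auto
    then obtain a b where ab: "x = a + b" "a \<in> FS.span BK" "b \<in> FS.span C" using FS.span_Un by blast
    have "f a = 0" using ab(2) spanBK_K K_def by auto
    then have "y = f b" using ab x L.add by simp
    then show "y \<in> FS.span (f ` C)" using L.span_image ab(3) by blast
  qed
  have dimfS: "FS.dim (f ` S) = card C" using FS.basis_card_eq_dim[OF fCS fS_span indC] cardfC by simp
  have "B = BK \<union> C" "BK \<inter> C = {}" using B(1) C_def by auto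
  moreover have "finite BK" "finite C" using finB B(1) C_def finite_subset by auto
  ultimately have "card B = card BK + card C" using card_Un_disjoint by metis
  then show ?thesis using dimS dimfS BK(4) K_def by simp
qed

lemma dim_inj_image:
  assumes lf: "flin f" and S: "FS.subspace S" "fd S" and inj: "\<forall>x\<in>S. f x = 0 \<longrightarrow> x = 0"
  shows "FS.dim (f ` S) = FS.dim S"
proof -
  have "{x\<in>S. f x = 0} = {0}" using inj FS.subspace_0[OF S(1)] flinD(3)[OF lf] by auto
  then show ?thesis using rank_nullity[OF assms(1-3)] dim_zero by simp
qed

lemma subspace_image_fl:
  assumes "flin f" "FS.subspace S" shows "FS.subspace (f ` S)"
proof -
  interpret L: Vector_Spaces.linear fscale fscale f by fact
  show ?thesis using L.subspace_image assms(2) by blast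
qed

lemma subspace_vimage_fl:
  assumes "flin f" "FS.subspace S" "FS.subspace T" shows "FS.subspace {x\<in>T. f x \<in> S}"
proof -
  interpret L: Vector_Spaces.linear fscale fscale f by fact
  have "{x\<in>T. f x \<in> S} = T \<inter> f -` S" by auto
  then show ?thesis using L.subspace_vimage assms FS.subspace_inter by metis
qed

definition Gam :: "'k set \<Rightarrow> ('k \<Rightarrow> ('y \<Rightarrow> nat \<Rightarrow> 'a::field) \<Rightarrow> ('x \<Rightarrow> nat \<Rightarrow> 'a)) \<Rightarrow> ('y \<Rightarrow> nat \<Rightarrow> 'a) set
    \<Rightarrow> ('x \<Rightarrow> nat \<Rightarrow> 'a) set \<Rightarrow> ('y \<Rightarrow> nat \<Rightarrow> 'a) set" where
  "Gam K \<phi> SE U = {x\<in>SE. \<forall>k\<in>K. \<phi> k x \<in> U}"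

definition exc :: "'k set \<Rightarrow> ('k \<Rightarrow> ('y \<Rightarrow> nat \<Rightarrow> 'a::field) \<Rightarrow> ('x \<Rightarrow> nat \<Rightarrow> 'a)) \<Rightarrow> ('y \<Rightarrow> nat \<Rightarrow> 'a) set
    \<Rightarrow> ('x \<Rightarrow> nat \<Rightarrow> 'a) set \<Rightarrow> int" where
  "exc K \<phi> SE U = int (FS.dim (Gam K \<phi> SE U)) - int (FS.dim U)"

definition ME :: "'k set \<Rightarrow> ('k \<Rightarrow> ('y \<Rightarrow> nat \<Rightarrow> 'a::field) \<Rightarrow> ('x \<Rightarrow> nat \<Rightarrow> 'a)) \<Rightarrow> ('x \<Rightarrow> nat \<Rightarrow> 'a) set
    \<Rightarrow> ('y \<Rightarrow> nat \<Rightarrow> 'a) set \<Rightarrow> int" where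
  "ME K \<phi> SV SE = Max {exc K \<phi> SE U | U. FS.subspace U \<and> U \<subseteq> SV}"

definition shok :: "'k set \<Rightarrow> ('k \<Rightarrow> ('y \<Rightarrow> nat \<Rightarrow> 'a::field) \<Rightarrow> ('x \<Rightarrow> nat \<Rightarrow> 'a)) \<Rightarrow> ('x \<Rightarrow> nat \<Rightarrow> 'a) set
    \<Rightarrow> ('y \<Rightarrow> nat \<Rightarrow> 'a) set \<Rightarrow> bool" where
  "shok K \<phi> SV SE \<longleftrightarrow> FS.subspace SV \<and> FS.subspace SE \<and> fd SV \<and> fd SE \<and>
     (\<forall>k\<in>K. flin (\<phi> k)) \<and> (\<forall>k\<in>K. \<forall>x\<in>SE. \<phi> k x \<in> SV)"

definition morok :: "'k set \<Rightarrow> ('k \<Rightarrow> ('y \<Rightarrow> nat \<Rightarrow> 'a::field) \<Rightarrow> ('x \<Rightarrow> nat \<Rightarrow> 'a)) \<Rightarrow> ('x \<Rightarrow> nat \<Rightarrow> 'a) set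
    \<Rightarrow> ('y \<Rightarrow> nat \<Rightarrow> 'a) set \<Rightarrow> ('k \<Rightarrow> ('y \<Rightarrow> nat \<Rightarrow> 'a::field) \<Rightarrow> ('x \<Rightarrow> nat \<Rightarrow> 'a)) \<Rightarrow> ('x \<Rightarrow> nat \<Rightarrow> 'a) set
    \<Rightarrow> ('y \<Rightarrow> nat \<Rightarrow> 'a) set \<Rightarrow> (('x \<Rightarrow> nat \<Rightarrow> 'a) \<Rightarrow> ('x \<Rightarrow> nat \<Rightarrow> 'a))
    \<Rightarrow> (('y \<Rightarrow> nat \<Rightarrow> 'a) \<Rightarrow> ('y \<Rightarrow> nat \<Rightarrow> 'a)) \<Rightarrow> bool" where
  "morok K \<phi>1 SV1 SE1 \<phi>2 SV2 SE2 AV AE \<longleftrightarrow> flin AV \<and> flin AE \<and> AV ` SV1 \<subseteq> SV2 \<and> AE ` SE1 \<subseteq> SE2 \<and>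
     (\<forall>k\<in>K. \<forall>x\<in>SE1. \<phi>2 k (AE x) = AV (\<phi>1 k x))"

definition exok :: "('x \<Rightarrow> nat \<Rightarrow> 'a::field) set \<Rightarrow> ('x \<Rightarrow> nat \<Rightarrow> 'a) set \<Rightarrow> ('x \<Rightarrow> nat \<Rightarrow> 'a) set
   \<Rightarrow> (('x \<Rightarrow> nat \<Rightarrow> 'a) \<Rightarrow> ('x \<Rightarrow> nat \<Rightarrow> 'a)) \<Rightarrow> (('x \<Rightarrow> nat \<Rightarrow> 'a) \<Rightarrow> ('x \<Rightarrow> nat \<Rightarrow> 'a)) \<Rightarrow> bool" where
  "exok S1 S2 S3 A B \<longleftrightarrow> (\<forall>x\<in>S1. A x = 0 \<longrightarrow> x = 0) \<and> A ` S1 = {y\<in>S2. B y = 0} \<and> B ` S2 = S3"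

lemma Gam_subspace:
  assumes "shok K \<phi> SV SE" "FS.subspace U"
  shows "FS.subspace (Gam K \<phi> SE U)"
proof -
  have SE: "FS.subspace SE" and L: "\<And>k. k\<in>K \<Longrightarrow> flin (\<phi> k)" using assms(1) by (auto simp: shok_def)
  have U: "0 \<in> U" "\<And>x y. x \<in> U \<Longrightarrow> y \<in> U \<Longrightarrow> x + y \<in> U" "\<And>c x. x \<in> U \<Longrightarrow> fscale c x \<in> U"
    using assms(2) by (auto simp: FS.subspace_def)
  have E: "0 \<in> SE" "\<And>x y. x \<in> SE \<Longrightarrow> y \<in> SE \<Longrightarrow> x + y \<in> SE" "\<And>c x. x \<in> SE \<Longrightarrow> fscale c x \<in> SE"
    using SE by (auto simp: FS.subspace_def)
  show ?thesis
    unfolding FS.subspace_def Gam_def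
  proof (intro conjI ballI allI)
    show "0 \<in> {x \<in> SE. \<forall>k\<in>K. \<phi> k x \<in> U}" using E(1) U(1) flinD(3)[OF L] by auto
  next
    fix x y assume "x \<in> {x \<in> SE. \<forall>k\<in>K. \<phi> k x \<in> U}" "y \<in> {x \<in> SE. \<forall>k\<in>K. \<phi> k x \<in> U}"
    then show "x + y \<in> {x \<in> SE. \<forall>k\<in>K. \<phi> k x \<in> U}" using E(2) U(2) flinD(1)[OF L] by auto
  next
    fix c x assume "x \<in> {x \<in> SE. \<forall>k\<in>K. \<phi> k x \<in> U}"
    then show "fscale c x \<in> {x \<in> SE. \<forall>k\<in>K. \<phi> k x \<in> U}" using E(3) U(3) flinD(2)[OF L] by auto
  qed
qed

lemma Gam_sub: "Gam K \<phi> SE U \<subseteq> SE" by (auto simp: Gam_def)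

lemma Gam_fd: "shok K \<phi> SV SE \<Longrightarrow> fd (Gam K \<phi> SE U)"
  by (rule fd_subset[OF _ Gam_sub]) (simp add: shok_def)

lemma ME_props:
  assumes s: "shok K \<phi> SV SE"
  shows "\<And>U. FS.subspace U \<Longrightarrow> U \<subseteq> SV \<Longrightarrow> exc K \<phi> SE U \<le> ME K \<phi> SV SE"
    and "\<exists>U. FS.subspace U \<and> U \<subseteq> SV \<and> ME K \<phi> SV SE = exc K \<phi> SE U"
proof -
  let ?X = "{exc K \<phi> SE U | U. FS.subspace U \<and> U \<subseteq> SV}"
  have fdV: "fd SV" and fdE: "fd SE" and sV: "FS.subspace SV" using s by (auto simp: shok_def)
  have "?X \<subseteq> {- int (FS.dim SV) .. int (FS.dim SE)}"
  proof
    fix z assume "z \<in> ?X"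
    then obtain U where U: "z = exc K \<phi> SE U" "U \<subseteq> SV" by blast
    have "FS.dim U \<le> FS.dim SV" using dim_mono_fd[OF fdV U(2)] .
    moreover have "FS.dim (Gam K \<phi> SE U) \<le> FS.dim SE" using dim_mono_fd[OF fdE Gam_sub] .
    ultimately show "z \<in> {- int (FS.dim SV) .. int (FS.dim SE)}" using U(1) by (auto simp: exc_def)
  qed
  then have fin: "finite ?X" using finite_subset by blast
  have "exc K \<phi> SE {0} \<in> ?X" using FS.subspace_0[OF sV] by auto
  then have ne: "?X \<noteq> {}" by blast
  show "\<And>U. FS.subspace U \<Longrightarrow> U \<subseteq> SV \<Longrightarrow> exc K \<phi> SE U \<le> ME K \<phi> SV SE"
    unfolding ME_def using fin by (intro Max_ge) auto
  have "ME K \<phi> SV SE \<in> ?X" unfolding ME_def using fin ne by (rule Max_in)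
  then show "\<exists>U. FS.subspace U \<and> U \<subseteq> SV \<and> ME K \<phi> SV SE = exc K \<phi> SE U" by blast
qed

lemma ME_nonneg:
  assumes s: "shok K \<phi> SV SE" shows "0 \<le> ME K \<phi> SV SE"
proof -
  have sV: "FS.subspace SV" using s by (auto simp: shok_def)
  have "exc K \<phi> SE {0} \<le> ME K \<phi> SV SE"
    using ME_props(1)[OF s] FS.subspace_0[OF sV] by auto
  then show ?thesis by (simp add: exc_def dim_zero)
qed

lemma ME_lower:
  assumes s: "shok K \<phi> SV SE" shows "int (FS.dim SE) - int (FS.dim SV) \<le> ME K \<phi> SV SE"
proof -
  have sV: "FS.subspace SV" and m: "\<forall>k\<in>K. \<forall>x\<in>SE. \<phi> k x \<in> SV" using s by (auto simp: shok_def)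
  have "Gam K \<phi> SE SV = SE" using m by (auto simp: Gam_def)
  then show ?thesis using ME_props(1)[OF s sV] by (simp add: exc_def)
qed

lemma me_mono:
  assumes s1: "shok K \<phi>1 SV1 SE1" and s2: "shok K \<phi>2 SV2 SE2"
    and mA: "morok K \<phi>1 SV1 SE1 \<phi>2 SV2 SE2 AV AE"
    and iV: "\<forall>x\<in>SV1. AV x = 0 \<longrightarrow> x = 0" and iE: "\<forall>x\<in>SE1. AE x = 0 \<longrightarrow> x = 0"
  shows "ME K \<phi>1 SV1 SE1 \<le> ME K \<phi>2 SV2 SE2"
proof -
  obtain U where U: "FS.subspace U" "U \<subseteq> SV1" "ME K \<phi>1 SV1 SE1 = exc K \<phi>1 SE1 U"
    using ME_props(2)[OF s1] by blast
  have lAV: "flin AV" and lAE: "flin AE" and AVS: "AV ` SV1 \<subseteq> SV2" and AES: "AE ` SE1 \<subseteq> SE2"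
    and com: "\<forall>k\<in>K. \<forall>x\<in>SE1. \<phi>2 k (AE x) = AV (\<phi>1 k x)" using mA by (auto simp: morok_def)
  have fdV1: "fd SV1" and fdE2: "fd SE2" using s1 s2 by (auto simp: shok_def)
  have fdU: "fd U" using fd_subset[OF fdV1 U(2)] .
  let ?U2 = "AV ` U"
  have U2: "FS.subspace ?U2" "?U2 \<subseteq> SV2" using subspace_image_fl[OF lAV U(1)] AVS U(2) by auto
  have dU: "FS.dim ?U2 = FS.dim U" using U(2) iV by (intro dim_inj_image[OF lAV U(1) fdU]) auto
  have G1s: "FS.subspace (Gam K \<phi>1 SE1 U)" using Gam_subspace[OF s1 U(1)] .
  have G1fd: "fd (Gam K \<phi>1 SE1 U)" using Gam_fd[OF s1] .
  have dG: "FS.dim (AE ` Gam K \<phi>1 SE1 U) = FS.dim (Gam K \<phi>1 SE1 U)"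
    using Gam_sub[of K \<phi>1 SE1 U] iE by (intro dim_inj_image[OF lAE G1s G1fd]) auto
  have "AE ` Gam K \<phi>1 SE1 U \<subseteq> Gam K \<phi>2 SE2 ?U2"
  proof
    fix y assume "y \<in> AE ` Gam K \<phi>1 SE1 U"
    then obtain x where x: "x \<in> SE1" "\<forall>k\<in>K. \<phi>1 k x \<in> U" "y = AE x" by (auto simp: Gam_def)
    have "AE x \<in> SE2" using AES x(1) by blast
    moreover have "\<forall>k\<in>K. \<phi>2 k (AE x) \<in> AV ` U" using com x(1,2) by simp
    ultimately show "y \<in> Gam K \<phi>2 SE2 ?U2" using x(3) by (simp add: Gam_def)
  qed
  then have "FS.dim (AE ` Gam K \<phi>1 SE1 U) \<le> FS.dim (Gam K \<phi>2 SE2 ?U2)"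
    by (rule dim_mono_fd[OF Gam_fd[OF s2]])
  then have "exc K \<phi>1 SE1 U \<le> exc K \<phi>2 SE2 ?U2" using dG dU by (simp add: exc_def)
  also have "\<dots> \<le> ME K \<phi>2 SV2 SE2" using ME_props(1)[OF s2 U2] .
  finally show ?thesis using U(3) by simp
qed

lemma dim_add:
  assumes "exok S1 S2 S3 A B" "flin A" "flin B" "FS.subspace S1" "fd S1" "FS.subspace S2" "fd S2"
  shows "FS.dim S2 = FS.dim S1 + FS.dim S3"
proof -
  have e: "\<forall>x\<in>S1. A x = 0 \<longrightarrow> x = 0" "A ` S1 = {y\<in>S2. B y = 0}" "B ` S2 = S3"
    using assms(1) by (auto simp: exok_def)
  have "FS.dim S2 = FS.dim (B ` S2) + FS.dim {x\<in>S2. B x = 0}" by (rule rank_nullity[OF assms(3,6,7)])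
  also have "{x\<in>S2. B x = 0} = A ` S1" using e(2) by simp
  also have "FS.dim (A ` S1) = FS.dim S1" using e(1) by (rule dim_inj_image[OF assms(2,4,5)])
  finally show ?thesis using e(3) by simp
qed

lemma me_sub:
  assumes s1: "shok K \<phi>1 SV1 SE1" and s2: "shok K \<phi>2 SV2 SE2" and s3: "shok K \<phi>3 SV3 SE3"
    and mA: "morok K \<phi>1 SV1 SE1 \<phi>2 SV2 SE2 AV AE" and mB: "morok K \<phi>2 SV2 SE2 \<phi>3 SV3 SE3 BV BE"
    and eV: "exok SV1 SV2 SV3 AV BV" and eE: "exok SE1 SE2 SE3 AE BE"
  shows "ME K \<phi>2 SV2 SE2 \<le> ME K \<phi>1 SV1 SE1 + ME K \<phi>3 SV3 SE3"
proof -
  obtain U where U: "FS.subspace U" "U \<subseteq> SV2" "ME K \<phi>2 SV2 SE2 = exc K \<phi>2 SE2 U"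
    using ME_props(2)[OF s2] by blast
  have lAV: "flin AV" and lAE: "flin AE" and AVS: "AV ` SV1 \<subseteq> SV2" and AES: "AE ` SE1 \<subseteq> SE2"
    and comA: "\<forall>k\<in>K. \<forall>x\<in>SE1. \<phi>2 k (AE x) = AV (\<phi>1 k x)" using mA by (auto simp: morok_def)
  have lBV: "flin BV" and lBE: "flin BE" and BVS: "BV ` SV2 \<subseteq> SV3" and BES: "BE ` SE2 \<subseteq> SE3"
    and comB: "\<forall>k\<in>K. \<forall>x\<in>SE2. \<phi>3 k (BE x) = BV (\<phi>2 k x)" using mB by (auto simp: morok_def)
  have eV': "\<forall>x\<in>SV1. AV x = 0 \<longrightarrow> x = 0" "AV ` SV1 = {y\<in>SV2. BV y = 0}" "BV ` SV2 = SV3"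
    using eV by (auto simp: exok_def)
  have eE': "\<forall>x\<in>SE1. AE x = 0 \<longrightarrow> x = 0" "AE ` SE1 = {y\<in>SE2. BE y = 0}" "BE ` SE2 = SE3"
    using eE by (auto simp: exok_def)
  have fdV1: "fd SV1" and fdV2: "fd SV2" and sV1: "FS.subspace SV1" and m1: "\<forall>k\<in>K. \<forall>x\<in>SE1. \<phi>1 k x \<in> SV1"
    using s1 s2 by (auto simp: shok_def)
  have fdE3: "fd SE3" using s3 by (auto simp: shok_def)
  define U1 where "U1 = {x\<in>SV1. AV x \<in> U}"
  define U3 where "U3 = BV ` U"
  have U1s: "FS.subspace U1" "U1 \<subseteq> SV1" unfolding U1_def using subspace_vimage_fl[OF lAV U(1) sV1] by auto
  have U3s: "FS.subspace U3" "U3 \<subseteq> SV3" unfolding U3_def using subspace_image_fl[OF lBV U(1)] U(2) BVS by auto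
  have fdU: "fd U" using fd_subset[OF fdV2 U(2)] .
  have fdU1: "fd U1" using fd_subset[OF fdV1 U1s(2)] .
  have "FS.dim U = FS.dim (BV ` U) + FS.dim {x\<in>U. BV x = 0}" by (rule rank_nullity[OF lBV U(1) fdU])
  also have "{x\<in>U. BV x = 0} = AV ` U1"
  proof
    show "{x\<in>U. BV x = 0} \<subseteq> AV ` U1"
    proof
      fix x assume x: "x \<in> {x\<in>U. BV x = 0}"
      then have "x \<in> AV ` SV1" using eV'(2) U(2) by auto
      then obtain z where "z \<in> SV1" "x = AV z" by blast
      then show "x \<in> AV ` U1" using x U1_def by auto
    qed
    show "AV ` U1 \<subseteq> {x\<in>U. BV x = 0}" using eV'(2) U1_def by auto
  qed
  also have "FS.dim (AV ` U1) = FS.dim U1" using U1s(2) eV'(1) by (intro dim_inj_image[OF lAV U1s(1) fdU1]) auto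
  finally have dU: "FS.dim U = FS.dim U3 + FS.dim U1" unfolding U3_def .
  let ?G = "Gam K \<phi>2 SE2 U"
  have Gs: "FS.subspace ?G" using Gam_subspace[OF s2 U(1)] .
  have Gfd: "fd ?G" using Gam_fd[OF s2] .
  let ?G1 = "Gam K \<phi>1 SE1 U1"
  have G1s: "FS.subspace ?G1" using Gam_subspace[OF s1 U1s(1)] .
  have G1fd: "fd ?G1" using Gam_fd[OF s1] .
  have "FS.dim ?G = FS.dim (BE ` ?G) + FS.dim {x\<in>?G. BE x = 0}" by (rule rank_nullity[OF lBE Gs Gfd])
  moreover have "FS.dim (BE ` ?G) \<le> FS.dim (Gam K \<phi>3 SE3 U3)"
  proof (rule dim_mono_fd[OF Gam_fd[OF s3]])
    show "BE ` ?G \<subseteq> Gam K \<phi>3 SE3 U3"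
    proof
      fix y assume "y \<in> BE ` ?G"
      then obtain x where x: "x \<in> SE2" "\<forall>k\<in>K. \<phi>2 k x \<in> U" "y = BE x" by (auto simp: Gam_def)
      have "BE x \<in> SE3" using BES x(1) by blast
      moreover have "\<forall>k\<in>K. \<phi>3 k (BE x) \<in> U3" using comB x(1,2) U3_def by simp
      ultimately show "y \<in> Gam K \<phi>3 SE3 U3" using x(3) by (simp add: Gam_def)
    qed
  qed
  moreover have "FS.dim {x\<in>?G. BE x = 0} \<le> FS.dim (AE ` ?G1)"
  proof (rule dim_mono_fd[OF fd_image[OF lAE G1fd]])
    show "{x\<in>?G. BE x = 0} \<subseteq> AE ` ?G1"
    proof
      fix x assume x: "x \<in> {x\<in>?G. BE x = 0}"
      then have xG: "x \<in> SE2" "\<forall>k\<in>K. \<phi>2 k x \<in> U" by (auto simp: Gam_def)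
      have "x \<in> AE ` SE1" using eE'(2) x xG(1) by auto
      then obtain z where z: "z \<in> SE1" "x = AE z" by blast
      have "\<forall>k\<in>K. \<phi>1 k z \<in> U1" using comA z xG(2) m1 U1_def by auto
      then have "z \<in> ?G1" using z(1) by (simp add: Gam_def)
      then show "x \<in> AE ` ?G1" using z(2) by blast
    qed
  qed
  moreover have "FS.dim (AE ` ?G1) = FS.dim ?G1"
    using Gam_sub[of K \<phi>1 SE1 U1] eE'(1) by (intro dim_inj_image[OF lAE G1s G1fd]) auto
  ultimately have "exc K \<phi>2 SE2 U \<le> exc K \<phi>1 SE1 U1 + exc K \<phi>3 SE3 U3"
    using dU by (simp add: exc_def)
  also have "\<dots> \<le> ME K \<phi>1 SV1 SE1 + ME K \<phi>3 SV3 SE3"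
    using ME_props(1)[OF s1 U1s] ME_props(1)[OF s3 U3s] by simp
  finally show ?thesis using U(3) by simp
qed

lemma me_quot:
  assumes s1: "shok K \<phi>1 SV1 SE1" and s2: "shok K \<phi>2 SV2 SE2" and s3: "shok K \<phi>3 SV3 SE3"
    and mA: "morok K \<phi>1 SV1 SE1 \<phi>2 SV2 SE2 AV AE" and mB: "morok K \<phi>2 SV2 SE2 \<phi>3 SV3 SE3 BV BE"
    and eV: "exok SV1 SV2 SV3 AV BV" and eE: "exok SE1 SE2 SE3 AE BE"
  shows "ME K \<phi>3 SV3 SE3 \<le> ME K \<phi>2 SV2 SE2 + int (FS.dim SV1) - int (FS.dim SE1)"
proof -
  obtain U3 where U3: "FS.subspace U3" "U3 \<subseteq> SV3" "ME K \<phi>3 SV3 SE3 = exc K \<phi>3 SE3 U3"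
    using ME_props(2)[OF s3] by blast
  have lAV: "flin AV" and lAE: "flin AE" and AVS: "AV ` SV1 \<subseteq> SV2" and AES: "AE ` SE1 \<subseteq> SE2"
    and comA: "\<forall>k\<in>K. \<forall>x\<in>SE1. \<phi>2 k (AE x) = AV (\<phi>1 k x)" using mA by (auto simp: morok_def)
  have lBV: "flin BV" and lBE: "flin BE" and BVS: "BV ` SV2 \<subseteq> SV3" and BES: "BE ` SE2 \<subseteq> SE3"
    and comB: "\<forall>k\<in>K. \<forall>x\<in>SE2. \<phi>3 k (BE x) = BV (\<phi>2 k x)" using mB by (auto simp: morok_def)
  have eV': "\<forall>x\<in>SV1. AV x = 0 \<longrightarrow> x = 0" "AV ` SV1 = {y\<in>SV2. BV y = 0}" "BV ` SV2 = SV3"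
    using eV by (auto simp: exok_def)
  have eE': "\<forall>x\<in>SE1. AE x = 0 \<longrightarrow> x = 0" "AE ` SE1 = {y\<in>SE2. BE y = 0}" "BE ` SE2 = SE3"
    using eE by (auto simp: exok_def)
  have fdV1: "fd SV1" and fdV2: "fd SV2" and sV1: "FS.subspace SV1" and sV2: "FS.subspace SV2"
    and m1: "\<forall>k\<in>K. \<forall>x\<in>SE1. \<phi>1 k x \<in> SV1" and m2: "\<forall>k\<in>K. \<forall>x\<in>SE2. \<phi>2 k x \<in> SV2"
    and fdE1: "fd SE1" and sE1: "FS.subspace SE1"
    using s1 s2 by (auto simp: shok_def)
  have z3: "0 \<in> U3" using FS.subspace_0[OF U3(1)] .
  define U where "U = {x\<in>SV2. BV x \<in> U3}"
  have Us: "FS.subspace U" "U \<subseteq> SV2" unfolding U_def using subspace_vimage_fl[OF lBV U3(1) sV2] by auto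
  have fdU: "fd U" using fd_subset[OF fdV2 Us(2)] .
  have "FS.dim U = FS.dim (BV ` U) + FS.dim {x\<in>U. BV x = 0}" by (rule rank_nullity[OF lBV Us(1) fdU])
  also have "BV ` U = U3"
  proof
    show "BV ` U \<subseteq> U3" unfolding U_def by auto
    show "U3 \<subseteq> BV ` U"
    proof
      fix y assume y: "y \<in> U3"
      then have "y \<in> BV ` SV2" using U3(2) eV'(3) by auto
      then obtain x where "x \<in> SV2" "y = BV x" by blast
      then show "y \<in> BV ` U" using y U_def by auto
    qed
  qed
  also have "{x\<in>U. BV x = 0} = AV ` SV1" using eV'(2) z3 U_def by auto
  also have "FS.dim (AV ` SV1) = FS.dim SV1" using eV'(1) by (rule dim_inj_image[OF lAV sV1 fdV1])
  finally have dU: "FS.dim U = FS.dim U3 + FS.dim SV1" .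
  let ?G = "Gam K \<phi>2 SE2 U"
  have Gs: "FS.subspace ?G" using Gam_subspace[OF s2 Us(1)] .
  have Gfd: "fd ?G" using Gam_fd[OF s2] .
  have "FS.dim ?G = FS.dim (BE ` ?G) + FS.dim {x\<in>?G. BE x = 0}" by (rule rank_nullity[OF lBE Gs Gfd])
  moreover have "BE ` ?G = Gam K \<phi>3 SE3 U3"
  proof
    show "BE ` ?G \<subseteq> Gam K \<phi>3 SE3 U3"
    proof
      fix y assume "y \<in> BE ` ?G"
      then obtain x where x: "x \<in> SE2" "\<forall>k\<in>K. \<phi>2 k x \<in> U" "y = BE x" by (auto simp: Gam_def)
      have "BE x \<in> SE3" using BES x(1) by blast
      moreover have "\<forall>k\<in>K. \<phi>3 k (BE x) \<in> U3" using comB x(1,2) U_def by simp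
      ultimately show "y \<in> Gam K \<phi>3 SE3 U3" using x(3) by (simp add: Gam_def)
    qed
    show "Gam K \<phi>3 SE3 U3 \<subseteq> BE ` ?G"
    proof
      fix w assume w: "w \<in> Gam K \<phi>3 SE3 U3"
      then have "w \<in> BE ` SE2" using eE'(3) by (auto simp: Gam_def)
      then obtain x where x: "x \<in> SE2" "w = BE x" by blast
      have "\<forall>k\<in>K. \<phi>2 k x \<in> U" using m2 x comB w U_def by (auto simp: Gam_def)
      then have "x \<in> ?G" using x(1) by (simp add: Gam_def)
      then show "w \<in> BE ` ?G" using x(2) by blast
    qed
  qed
  moreover have "{x\<in>?G. BE x = 0} = AE ` SE1"
  proof
    show "{x\<in>?G. BE x = 0} \<subseteq> AE ` SE1" using eE'(2) by (auto simp: Gam_def)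
    show "AE ` SE1 \<subseteq> {x\<in>?G. BE x = 0}"
    proof
      fix x assume "x \<in> AE ` SE1"
      then obtain z where z: "z \<in> SE1" "x = AE z" by blast
      have xk: "x \<in> SE2" "BE x = 0" using z eE'(2) by auto
      have "\<forall>k\<in>K. \<phi>2 k x \<in> U"
      proof
        fix k assume k: "k \<in> K"
        have "\<phi>2 k x = AV (\<phi>1 k z)" using comA k z by simp
        moreover have "\<phi>1 k z \<in> SV1" using m1 k z by simp
        ultimately have "\<phi>2 k x \<in> SV2" "BV (\<phi>2 k x) = 0" using eV'(2) by auto
        then show "\<phi>2 k x \<in> U" using z3 U_def by simp
      qed
      then show "x \<in> {x\<in>?G. BE x = 0}" using xk by (simp add: Gam_def)
    qed
  qed
  moreover have "FS.dim (AE ` SE1) = FS.dim SE1" using eE'(1) by (rule dim_inj_image[OF lAE sE1 fdE1])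
  ultimately have "exc K \<phi>3 SE3 U3 = exc K \<phi>2 SE2 U + int (FS.dim SV1) - int (FS.dim SE1)"
    using dU by (simp add: exc_def)
  also have "\<dots> \<le> ME K \<phi>2 SV2 SE2 + int (FS.dim SV1) - int (FS.dim SE1)"
    using ME_props(1)[OF s2 Us] by simp
  finally show ?thesis using U3(3) by simp
qed

lemma me_split:
  assumes s1: "shok K \<phi>1 SV1 SE1" and s2: "shok K \<phi>2 SV2 SE2" and s3: "shok K \<phi>3 SV3 SE3"
    and mA: "morok K \<phi>1 SV1 SE1 \<phi>2 SV2 SE2 AV AE" and mB: "morok K \<phi>2 SV2 SE2 \<phi>3 SV3 SE3 BV BE"
    and eV: "exok SV1 SV2 SV3 AV BV" and eE: "exok SE1 SE2 SE3 AE BE"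
    and mS: "morok K \<phi>3 SV3 SE3 \<phi>2 SV2 SE2 sV sE"
    and secV: "\<forall>y\<in>SV3. BV (sV y) = y" and secE: "\<forall>y\<in>SE3. BE (sE y) = y"
  shows "ME K \<phi>1 SV1 SE1 + ME K \<phi>3 SV3 SE3 \<le> ME K \<phi>2 SV2 SE2"
proof -
  obtain U1 where U1: "FS.subspace U1" "U1 \<subseteq> SV1" "ME K \<phi>1 SV1 SE1 = exc K \<phi>1 SE1 U1"
    using ME_props(2)[OF s1] by blast
  obtain U3 where U3: "FS.subspace U3" "U3 \<subseteq> SV3" "ME K \<phi>3 SV3 SE3 = exc K \<phi>3 SE3 U3"
    using ME_props(2)[OF s3] by blast
  have lAV: "flin AV" and lAE: "flin AE" and AVS: "AV ` SV1 \<subseteq> SV2" and AES: "AE ` SE1 \<subseteq> SE2"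
    and comA: "\<forall>k\<in>K. \<forall>x\<in>SE1. \<phi>2 k (AE x) = AV (\<phi>1 k x)" using mA by (auto simp: morok_def)
  have lBV: "flin BV" and lBE: "flin BE" and BVS: "BV ` SV2 \<subseteq> SV3" and BES: "BE ` SE2 \<subseteq> SE3"
    and comB: "\<forall>k\<in>K. \<forall>x\<in>SE2. \<phi>3 k (BE x) = BV (\<phi>2 k x)" using mB by (auto simp: morok_def)
  have lsV: "flin sV" and lsE: "flin sE" and sVS: "sV ` SV3 \<subseteq> SV2" and sES: "sE ` SE3 \<subseteq> SE2"
    and comS: "\<forall>k\<in>K. \<forall>x\<in>SE3. \<phi>2 k (sE x) = sV (\<phi>3 k x)" using mS by (auto simp: morok_def)
  have eV': "\<forall>x\<in>SV1. AV x = 0 \<longrightarrow> x = 0" "AV ` SV1 = {y\<in>SV2. BV y = 0}" "BV ` SV2 = SV3"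
    using eV by (auto simp: exok_def)
  have eE': "\<forall>x\<in>SE1. AE x = 0 \<longrightarrow> x = 0" "AE ` SE1 = {y\<in>SE2. BE y = 0}" "BE ` SE2 = SE3"
    using eE by (auto simp: exok_def)
  have fdV2: "fd SV2" and sV2: "FS.subspace SV2" and fdV1: "fd SV1"
    and m3: "\<forall>k\<in>K. \<forall>x\<in>SE3. \<phi>3 k x \<in> SV3" and m1: "\<forall>k\<in>K. \<forall>x\<in>SE1. \<phi>1 k x \<in> SV1"
    using s1 s2 s3 by (auto simp: shok_def)
  have z1: "0 \<in> U1" using FS.subspace_0[OF U1(1)] .
  have z3: "0 \<in> U3" using FS.subspace_0[OF U3(1)] .
  note fAV = flinD[OF lAV] and fBV = flinD[OF lBV] and fsV = flinD[OF lsV]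
  note fAE = flinD[OF lAE] and fBE = flinD[OF lBE] and fsE = flinD[OF lsE]
  define U where "U = {AV x + sV y | x y. x \<in> U1 \<and> y \<in> U3}"
  have BVAV: "\<And>x. x \<in> SV1 \<Longrightarrow> BV (AV x) = 0" using eV'(2) by blast
  have Us: "FS.subspace U"
    unfolding FS.subspace_def
  proof (intro conjI ballI allI)
    show "0 \<in> U" unfolding U_def using z1 z3 fAV(3) fsV(3) by force
  next
    fix a b assume "a \<in> U" "b \<in> U"
    then obtain x y x' y' where xy: "a = AV x + sV y" "x \<in> U1" "y \<in> U3" "b = AV x' + sV y'" "x' \<in> U1" "y' \<in> U3"
      unfolding U_def by blast
    have "a + b = AV (x + x') + sV (y + y')" using xy fAV(1) fsV(1) by (simp add: algebra_simps)
    moreover have "x + x' \<in> U1" "y + y' \<in> U3" using xy U1(1) U3(1) by (auto simp: FS.subspace_def)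
    ultimately show "a + b \<in> U" unfolding U_def by blast
  next
    fix c a assume "a \<in> U"
    then obtain x y where xy: "a = AV x + sV y" "x \<in> U1" "y \<in> U3" unfolding U_def by blast
    have "fscale c a = AV (fscale c x) + sV (fscale c y)" using xy fAV(2) fsV(2) FS.scale_right_distrib by simp
    moreover have "fscale c x \<in> U1" "fscale c y \<in> U3" using xy U1(1) U3(1) by (auto simp: FS.subspace_def)
    ultimately show "fscale c a \<in> U" unfolding U_def by blast
  qed
  have UV: "U \<subseteq> SV2"
  proof
    fix a assume "a \<in> U"
    then obtain x y where xy: "a = AV x + sV y" "x \<in> U1" "y \<in> U3" unfolding U_def by blast
    have "AV x \<in> SV2" using xy U1(2) AVS by blast
    have "sV y \<in> SV2" using xy U3(2) sVS by blast
    then show "a \<in> SV2" using xy(1) sV2 \<open>AV x \<in> SV2\<close> by (simp add: FS.subspace_add)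
  qed
  have BVU: "\<And>x y. x \<in> U1 \<Longrightarrow> y \<in> U3 \<Longrightarrow> BV (AV x + sV y) = y"
  proof -
    fix x y assume xy: "x \<in> U1" "y \<in> U3"
    have "x \<in> SV1" "y \<in> SV3" using xy U1(2) U3(2) by blast+
    then show "BV (AV x + sV y) = y" using fBV(1) BVAV secV by simp
  qed
  have fdU: "fd U" using fd_subset[OF fdV2 UV] .
  have fdU1: "fd U1" using fd_subset[OF fdV1 U1(2)] .
  have "FS.dim U = FS.dim (BV ` U) + FS.dim {x\<in>U. BV x = 0}" by (rule rank_nullity[OF lBV Us fdU])
  also have "BV ` U = U3"
  proof
    show "BV ` U \<subseteq> U3" unfolding U_def using BVU by auto
    show "U3 \<subseteq> BV ` U"
    proof
      fix y assume y: "y \<in> U3"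
      then have "AV 0 + sV y \<in> U" unfolding U_def using z1 by blast
      moreover have "BV (AV 0 + sV y) = y" using BVU[OF z1 y] .
      ultimately show "y \<in> BV ` U" by (metis image_eqI)
    qed
  qed
  also have "{x\<in>U. BV x = 0} = AV ` U1"
  proof
    show "{x\<in>U. BV x = 0} \<subseteq> AV ` U1"
    proof
      fix a assume a: "a \<in> {x\<in>U. BV x = 0}"
      then obtain x y where xy: "a = AV x + sV y" "x \<in> U1" "y \<in> U3" unfolding U_def by blast
      have "y = 0" using a xy BVU by auto
      then have "a = AV x" using xy fsV(3) by simp
      then show "a \<in> AV ` U1" using xy by blast
    qed
    show "AV ` U1 \<subseteq> {x\<in>U. BV x = 0}"
    proof
      fix a assume "a \<in> AV ` U1"
      then obtain x where x: "x \<in> U1" "a = AV x" by blast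
      have "a = AV x + sV 0" using x fsV(3) by simp
      then have "a \<in> U" unfolding U_def using x z3 by blast
      moreover have "BV a = 0" using x BVAV U1(2) by auto
      ultimately show "a \<in> {x\<in>U. BV x = 0}" by simp
    qed
  qed
  also have "FS.dim (AV ` U1) = FS.dim U1" using U1(2) eV'(1) by (intro dim_inj_image[OF lAV U1(1) fdU1]) auto
  finally have dU: "FS.dim U = FS.dim U3 + FS.dim U1" .
  let ?G = "Gam K \<phi>2 SE2 U"
  have Gs: "FS.subspace ?G" using Gam_subspace[OF s2 Us] .
  have Gfd: "fd ?G" using Gam_fd[OF s2] .
  let ?G1 = "Gam K \<phi>1 SE1 U1"
  have G1s: "FS.subspace ?G1" using Gam_subspace[OF s1 U1(1)] .
  have G1fd: "fd ?G1" using Gam_fd[OF s1] .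
  have "FS.dim ?G = FS.dim (BE ` ?G) + FS.dim {x\<in>?G. BE x = 0}" by (rule rank_nullity[OF lBE Gs Gfd])
  moreover have "FS.dim (Gam K \<phi>3 SE3 U3) \<le> FS.dim (BE ` ?G)"
  proof (rule dim_mono_fd[OF fd_image[OF lBE Gfd]])
    show "Gam K \<phi>3 SE3 U3 \<subseteq> BE ` ?G"
    proof
      fix w assume w: "w \<in> Gam K \<phi>3 SE3 U3"
      then have wE: "w \<in> SE3" "\<forall>k\<in>K. \<phi>3 k w \<in> U3" by (auto simp: Gam_def)
      have "sE w \<in> SE2" using sES wE(1) by blast
      moreover have "\<forall>k\<in>K. \<phi>2 k (sE w) \<in> U"
      proof
        fix k assume k: "k \<in> K"
        have "\<phi>2 k (sE w) = AV 0 + sV (\<phi>3 k w)" using comS k wE(1) fAV(3) by simp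
        then show "\<phi>2 k (sE w) \<in> U" unfolding U_def using z1 wE(2) k by blast
      qed
      ultimately have "sE w \<in> ?G" by (simp add: Gam_def)
      moreover have "BE (sE w) = w" using secE wE(1) by simp
      ultimately show "w \<in> BE ` ?G" by (metis image_eqI)
    qed
  qed
  moreover have "FS.dim (AE ` ?G1) \<le> FS.dim {x\<in>?G. BE x = 0}"
  proof (rule dim_mono_fd[OF fd_subset[OF Gfd]])
    show "{x\<in>?G. BE x = 0} \<subseteq> ?G" by blast
    show "AE ` ?G1 \<subseteq> {x\<in>?G. BE x = 0}"
    proof
      fix a assume "a \<in> AE ` ?G1"
      then obtain z where z: "z \<in> SE1" "\<forall>k\<in>K. \<phi>1 k z \<in> U1" "a = AE z" by (auto simp: Gam_def)
      have "a \<in> SE2" "BE a = 0" using z(1,3) eE'(2) by auto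
      moreover have "\<forall>k\<in>K. \<phi>2 k a \<in> U"
      proof
        fix k assume k: "k \<in> K"
        have "\<phi>2 k a = AV (\<phi>1 k z) + sV 0" using comA k z fsV(3) by simp
        then show "\<phi>2 k a \<in> U" unfolding U_def using z3 z(2) k by blast
      qed
      ultimately show "a \<in> {x\<in>?G. BE x = 0}" by (simp add: Gam_def)
    qed
  qed
  moreover have "FS.dim (AE ` ?G1) = FS.dim ?G1"
    using Gam_sub[of K \<phi>1 SE1 U1] eE'(1) by (intro dim_inj_image[OF lAE G1s G1fd]) auto
  ultimately have "exc K \<phi>1 SE1 U1 + exc K \<phi>3 SE3 U3 \<le> exc K \<phi>2 SE2 U"
    using dU by (simp add: exc_def)
  also have "\<dots> \<le> ME K \<phi>2 SV2 SE2" using ME_props(1)[OF s2 Us UV] .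
  finally show ?thesis using U1(3) U3(3) by simp
qed

lemma fsum_apply: "(sum f A) b = sum (\<lambda>p. f p b) A"
  by (induct A rule: infinite_finite_induct) auto

lemma lin_in: "lin m n M x \<in> cspace m"
  by (simp add: lin_def cspace_def)

lemma lin_add: "lin m n M (x + y) = lin m n M x + lin m n M y"
  by (simp add: lin_def fun_eq_iff sum.distrib distrib_left)

lemma lin_scale: "lin m n (M :: nat \<Rightarrow> nat \<Rightarrow> 'a::field) (\<lambda>i. c * x i) = (\<lambda>i. c * lin m n M x i)"
  by (simp add: lin_def fun_eq_iff sum_distrib_left algebra_simps)

lemma lin_zero: "lin m n M 0 = 0"
  by (simp add: lin_def fun_eq_iff)

definition secG :: "'b set \<Rightarrow> ('b \<Rightarrow> nat) \<Rightarrow> ('b \<Rightarrow> nat \<Rightarrow> 'a::field) set" where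
  "secG I n = {x. \<forall>b. (b \<in> I \<longrightarrow> x b \<in> cspace (n b)) \<and> (b \<notin> I \<longrightarrow> x b = 0)}"

lemma secV_eq: "secV G F = secG (verts G) (sv F)" by (simp add: secV_def secG_def)
lemma secE_eq: "secE G F = secG (arcs G) (se F)" by (simp add: secE_def secG_def)

lemma secG_subspace: "FS.subspace (secG I n)"
  unfolding FS.subspace_def secG_def cspace_def by (auto simp: fscale_def)

definition delta :: "'b \<Rightarrow> nat \<Rightarrow> ('b \<Rightarrow> nat \<Rightarrow> 'a::field)" where
  "delta b i = (\<lambda>b' j. if b' = b \<and> j = i then 1 else 0)"

lemma secG_dim:
  assumes "finite I"
  shows "fd (secG I n :: ('b \<Rightarrow> nat \<Rightarrow> 'a::field) set)" "FS.dim (secG I n :: ('b \<Rightarrow> nat \<Rightarrow> 'a::field) set) = (\<Sum>b\<in>I. n b)"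
proof -
  define Sg where "Sg = (SIGMA b:I. {..<n b})"
  define dl :: "'b \<times> nat \<Rightarrow> ('b \<Rightarrow> nat \<Rightarrow> 'a)" where "dl = (\<lambda>p. delta (fst p) (snd p))"
  define Bs where "Bs = dl ` Sg"
  have finSg: "finite Sg" unfolding Sg_def using assms by auto
  have inj: "inj_on dl Sg"
  proof (rule inj_onI)
    fix p q assume "dl p = dl q"
    then have "dl p (fst p) (snd p) = dl q (fst p) (snd p)" by simp
    then show "p = q" by (auto simp: dl_def delta_def split: if_splits prod.splits) (metis prod.collapse)
  qed
  have cardB: "card Bs = (\<Sum>b\<in>I. n b)"
  proof -
    have "card Bs = card Sg" unfolding Bs_def using card_image[OF inj] .
    also have "\<dots> = (\<Sum>b\<in>I. card {..<n b})" unfolding Sg_def using assms by (intro card_SigmaI) auto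
    finally show ?thesis by simp
  qed
  have finB: "finite Bs" using finSg Bs_def by simp
  have BsS: "Bs \<subseteq> secG I n"
    unfolding Bs_def Sg_def secG_def cspace_def dl_def delta_def by auto
  have span: "secG I n \<subseteq> FS.span Bs"
  proof
    fix x :: "'b \<Rightarrow> nat \<Rightarrow> 'a" assume x: "x \<in> secG I n"
    have "x = (\<Sum>p\<in>Sg. fscale (x (fst p) (snd p)) (dl p))"
    proof (rule ext, rule ext)
      fix b j
      have "(\<Sum>p\<in>Sg. fscale (x (fst p) (snd p)) (dl p)) b j
          = (\<Sum>p\<in>Sg. (if p = (b, j) then x b j else 0))"
        by (simp add: fsum_apply fscale_def dl_def delta_def) (intro sum.cong, auto)
      also have "\<dots> = (if (b, j) \<in> Sg then x b j else 0)" using finSg by (simp add: sum.delta')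
      also have "\<dots> = x b j" using x unfolding Sg_def secG_def cspace_def
        by (cases "b \<in> I"; cases "j < n b") auto
      finally show "x b j = (\<Sum>p\<in>Sg. fscale (x (fst p) (snd p)) (dl p)) b j" by simp
    qed
    also have "\<dots> \<in> FS.span Bs"
      by (intro FS.span_sum FS.span_scale FS.span_base) (auto simp: Bs_def)
    finally show "x \<in> FS.span Bs" .
  qed
  have ind: "FS.independent Bs"
  proof (rule FS.independent_if_scalars_zero[OF finB])
    fix f and y :: "'b \<Rightarrow> nat \<Rightarrow> 'a"
    assume s: "(\<Sum>x\<in>Bs. fscale (f x) x) = 0" and y: "y \<in> Bs"
    then obtain p where p: "p \<in> Sg" "y = dl p" unfolding Bs_def by blast
    have "(\<Sum>q\<in>Sg. fscale (f (dl q)) (dl q)) = 0"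
      using s unfolding Bs_def by (simp add: sum.reindex[OF inj])
    then have "(\<Sum>q\<in>Sg. fscale (f (dl q)) (dl q)) (fst p) (snd p) = 0" by simp
    moreover have "(\<Sum>q\<in>Sg. fscale (f (dl q)) (dl q)) (fst p) (snd p) = (\<Sum>q\<in>Sg. (if q = p then f (dl p) else 0))"
      unfolding fsum_apply by (intro sum.cong refl) (auto simp: fscale_def dl_def delta_def prod_eq_iff)
    ultimately have "(\<Sum>q\<in>Sg. (if q = p then f (dl p) else 0)) = 0" by simp
    then show "f y = 0" using p finSg by (simp add: sum.delta')
  qed
  show "fd (secG I n :: ('b \<Rightarrow> nat \<Rightarrow> 'a::field) set)" unfolding fd_def using span finB by blast
  show "FS.dim (secG I n :: ('b \<Rightarrow> nat \<Rightarrow> 'a::field) set) = (\<Sum>b\<in>I. n b)"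
    using FS.basis_card_eq_dim[OF BsS span ind] cardB by simp
qed

lemma fdg: assumes "fin_digraph G"
  shows "finite (verts G)" "finite (arcs G)" "\<And>e. e \<in> arcs G \<Longrightarrow> head G e \<in> verts G"
    "\<And>e. e \<in> arcs G \<Longrightarrow> tail G e \<in> verts G"
proof -
  interpret fin_digraph G by fact
  show "finite (verts G)" "finite (arcs G)" "\<And>e. e \<in> arcs G \<Longrightarrow> head G e \<in> verts G"
    "\<And>e. e \<in> arcs G \<Longrightarrow> tail G e \<in> verts G" by auto
qed

definition lift :: "'b set \<Rightarrow> ('b \<Rightarrow> (nat \<Rightarrow> 'a::field) \<Rightarrow> (nat \<Rightarrow> 'a)) \<Rightarrow> ('b \<Rightarrow> nat \<Rightarrow> 'a) \<Rightarrow> ('b \<Rightarrow> nat \<Rightarrow> 'a)" where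
  "lift I A x = (\<lambda>b. if b \<in> I then A b (x b) else 0)"

lemma lift_flin: "flin (lift I (\<lambda>b. lin (m b) (k b) (M b)))"
  by (rule flinI) (simp_all add: lift_def fun_eq_iff fscale_def lin_add lin_scale)

lemma lift_maps:
  assumes "\<forall>b\<in>I. \<forall>x\<in>cspace (n1 b). A b x \<in> cspace (n2 b)"
  shows "lift I A ` secG I n1 \<subseteq> secG I n2"
  using assms unfolding lift_def secG_def by (auto simp: cspace_def)

lemma secG_iff: "x \<in> secG I n \<longleftrightarrow> (\<forall>b\<in>I. x b \<in> cspace (n b)) \<and> (\<forall>b. b \<notin> I \<longrightarrow> x b = 0)"
  by (auto simp: secG_def)

lemma lift_apply: "lift I A x b = (if b \<in> I then A b (x b) else 0)"
  by (simp add: lift_def)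

lemma lift_eq0: "lift I A x = 0 \<longleftrightarrow> (\<forall>b\<in>I. A b (x b) = 0)"
proof
  assume a: "lift I A x = 0"
  show "\<forall>b\<in>I. A b (x b) = 0"
  proof
    fix b assume b: "b \<in> I"
    have "lift I A x b = 0" using a by simp
    then show "A b (x b) = 0" using b by (simp add: lift_apply)
  qed
next
  assume "\<forall>b\<in>I. A b (x b) = 0"
  then show "lift I A x = 0" by (auto simp: lift_apply fun_eq_iff)
qed

lemma lift_exok:
  fixes A B :: "'b \<Rightarrow> (nat \<Rightarrow> 'a::field) \<Rightarrow> (nat \<Rightarrow> 'a)"
  assumes ex: "\<forall>b\<in>I. short_exact_lin (n1 b) (n2 b) (n3 b) (A b) (B b)" and z: "\<forall>b. A b 0 = 0"
  shows "exok (secG I n1) (secG I n2) (secG I n3) (lift I A) (lift I B)"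
proof -
  have inj: "\<And>b. b \<in> I \<Longrightarrow> inj_on (A b) (cspace (n1 b))"
   and im: "\<And>b. b \<in> I \<Longrightarrow> A b ` cspace (n1 b) = {y \<in> cspace (n2 b). B b y = 0}"
   and su: "\<And>b. b \<in> I \<Longrightarrow> B b ` cspace (n2 b) = cspace (n3 b)"
    using ex by (auto simp: short_exact_lin_def)
  have z0: "\<And>n. 0 \<in> cspace n" by (simp add: cspace_def)
  have p1: "\<forall>x\<in>secG I n1. lift I A x = 0 \<longrightarrow> x = 0"
  proof (intro ballI impI)
    fix x :: "'b \<Rightarrow> nat \<Rightarrow> 'a" assume x: "x \<in> secG I n1" "lift I A x = 0"
    have "\<forall>b. x b = 0"
    proof
    fix b
    show "x b = 0"
    proof (cases "b \<in> I")
      case True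
      then have "A b (x b) = A b 0" using x(2) z unfolding lift_eq0 by simp
      moreover have "x b \<in> cspace (n1 b)" using x(1) True by (simp add: secG_iff)
      ultimately show "x b = 0" using inj[OF True] z0 by (meson inj_onD)
    next
      case False then show ?thesis using x(1) by (simp add: secG_iff)
    qed
    qed
    then show "x = 0" by (simp add: fun_eq_iff)
  qed
  have p2: "lift I A ` secG I n1 = {y \<in> secG I n2. lift I B y = 0}"
  proof
    show "lift I A ` secG I n1 \<subseteq> {y \<in> secG I n2. lift I B y = 0}"
    proof
      fix y :: "'b \<Rightarrow> nat \<Rightarrow> 'a" assume "y \<in> lift I A ` secG I n1"
      then obtain x where x: "x \<in> secG I n1" "y = lift I A x" by blast
      have xb: "\<And>b. b \<in> I \<Longrightarrow> x b \<in> cspace (n1 b)" using x(1) by (simp add: secG_iff)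
      have yb: "\<And>b. b \<in> I \<Longrightarrow> y b \<in> cspace (n2 b) \<and> B b (y b) = 0"
      proof -
        fix b assume b: "b \<in> I"
        have "A b (x b) \<in> {y \<in> cspace (n2 b). B b y = 0}" using im[OF b] xb[OF b] by blast
        then show "y b \<in> cspace (n2 b) \<and> B b (y b) = 0" using x(2) b by (simp add: lift_apply)
      qed
      have "y \<in> secG I n2" using yb x(2) by (simp add: secG_iff lift_apply)
      moreover have "lift I B y = 0" using yb by (simp add: lift_eq0)
      ultimately show "y \<in> {y \<in> secG I n2. lift I B y = 0}" by simp
    qed
    show "{y \<in> secG I n2. lift I B y = 0} \<subseteq> lift I A ` secG I n1"
    proof
      fix y :: "'b \<Rightarrow> nat \<Rightarrow> 'a" assume y: "y \<in> {y \<in> secG I n2. lift I B y = 0}"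
      have yb: "\<forall>b\<in>I. y b \<in> {y \<in> cspace (n2 b). B b y = 0}"
        using y by (simp add: secG_iff lift_eq0)
      have ex1: "\<forall>b\<in>I. \<exists>x. x \<in> cspace (n1 b) \<and> A b x = y b"
      proof
        fix b assume b: "b \<in> I"
        then have "y b \<in> A b ` cspace (n1 b)" using yb im[OF b] by blast
        then show "\<exists>x. x \<in> cspace (n1 b) \<and> A b x = y b" by (metis imageE)
      qed
      define x where "x = (\<lambda>b. if b \<in> I then (SOME x. x \<in> cspace (n1 b) \<and> A b x = y b) else 0)"
      have xs: "\<forall>b\<in>I. x b \<in> cspace (n1 b) \<and> A b (x b) = y b"
      proof
        fix b assume b: "b \<in> I"
        have xb: "x b = (SOME x. x \<in> cspace (n1 b) \<and> A b x = y b)" using b by (simp add: x_def)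
        have e: "\<exists>x. x \<in> cspace (n1 b) \<and> A b x = y b" using ex1 b by blast
        show "x b \<in> cspace (n1 b) \<and> A b (x b) = y b" unfolding xb by (rule someI_ex[OF e])
      qed
      have "x \<in> secG I n1" using xs unfolding secG_iff x_def by simp
      moreover have "lift I A x = y"
      proof
        fix b show "lift I A x b = y b" using xs y by (cases "b \<in> I") (simp_all add: lift_apply secG_iff)
      qed
      ultimately show "y \<in> lift I A ` secG I n1" by blast
    qed
  qed
  have p3: "lift I B ` secG I n2 = secG I n3"
  proof
    show "lift I B ` secG I n2 \<subseteq> secG I n3"
    proof
      fix y :: "'b \<Rightarrow> nat \<Rightarrow> 'a" assume "y \<in> lift I B ` secG I n2"
      then obtain x where x: "x \<in> secG I n2" "y = lift I B x" by blast
      have "\<forall>b\<in>I. B b (x b) \<in> cspace (n3 b)" using x(1) su unfolding secG_iff by blast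
      then show "y \<in> secG I n3" using x(2) by (simp add: secG_iff lift_apply)
    qed
    show "secG I n3 \<subseteq> lift I B ` secG I n2"
    proof
      fix y :: "'b \<Rightarrow> nat \<Rightarrow> 'a" assume y: "y \<in> secG I n3"
      have y3: "\<forall>b\<in>I. y b \<in> cspace (n3 b)" using y by (simp add: secG_iff)
      have ex1: "\<forall>b\<in>I. \<exists>x. x \<in> cspace (n2 b) \<and> B b x = y b"
      proof
        fix b assume b: "b \<in> I"
        then have "y b \<in> B b ` cspace (n2 b)" using su[OF b] y3 by blast
        then show "\<exists>x. x \<in> cspace (n2 b) \<and> B b x = y b" by (metis imageE)
      qed
      define x where "x = (\<lambda>b. if b \<in> I then (SOME x. x \<in> cspace (n2 b) \<and> B b x = y b) else 0)"
      have xs: "\<forall>b\<in>I. x b \<in> cspace (n2 b) \<and> B b (x b) = y b"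
      proof
        fix b assume b: "b \<in> I"
        have xb: "x b = (SOME x. x \<in> cspace (n2 b) \<and> B b x = y b)" using b by (simp add: x_def)
        have e: "\<exists>x. x \<in> cspace (n2 b) \<and> B b x = y b" using ex1 b by blast
        show "x b \<in> cspace (n2 b) \<and> B b (x b) = y b" unfolding xb by (rule someI_ex[OF e])
      qed
      have "x \<in> secG I n2" using xs unfolding secG_iff x_def by simp
      moreover have "lift I B x = y"
      proof
        fix b show "lift I B x b = y b" using xs y by (cases "b \<in> I") (simp_all add: lift_apply secG_iff)
      qed
      ultimately show "y \<in> lift I B ` secG I n2" by blast
    qed
  qed
  show ?thesis using p1 p2 p3 by (simp add: exok_def)
qed

definition pt :: "'v \<Rightarrow> nat \<Rightarrow> nat \<Rightarrow> (nat \<Rightarrow> nat \<Rightarrow> 'a::field) \<Rightarrow> 'e \<Rightarrow> ('e \<Rightarrow> nat \<Rightarrow> 'a) \<Rightarrow> ('v \<Rightarrow> nat \<Rightarrow> 'a)" where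
  "pt h m k M e x = (\<lambda>v. if v = h then lin m k M (x e) else 0)"

lemma pt_flin: "flin (pt h m k M e)"
  by (rule flinI) (simp_all add: pt_def fun_eq_iff fscale_def lin_add lin_scale)

lemma lin_beyond: "m \<le> i \<Longrightarrow> lin m n M x i = 0"
  by (simp add: lin_def)

lemma pt_in: "h \<in> I \<Longrightarrow> pt h (n h) k M e x \<in> secG I n"
  by (auto simp: pt_def secG_def lin_beyond cspace_def)

definition phi :: "('v,'e) pre_digraph \<Rightarrow> ('v,'e,'a::field) sheaf \<Rightarrow> 'e \<times> bool \<Rightarrow> ('e \<Rightarrow> nat \<Rightarrow> 'a) \<Rightarrow> ('v \<Rightarrow> nat \<Rightarrow> 'a)" where
  "phi G F k x = (if snd k then d_h G F (emb (fst k) (x (fst k))) else d_t G F (emb (fst k) (x (fst k))))"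

lemma d_h_emb:
  assumes G: "fin_digraph G" and e: "e \<in> arcs G"
  shows "d_h G F (emb e w) = (\<lambda>v. if v = head G e then resH G F e w else 0)"
proof
  fix v
  show "d_h G F (emb e w) v = (if v = head G e then resH G F e w else 0)"
  proof (cases "v \<in> verts G")
    case True
    have fin: "finite {e'\<in>arcs G. head G e' = v}" using fdg(2)[OF G] by simp
    have "d_h G F (emb e w) v = (\<Sum>e'\<in>{e'\<in>arcs G. head G e' = v}. resH G F e' (emb e w e'))"
      using True by (simp add: d_h_def)
    also have "\<dots> = (\<Sum>e'\<in>{e'\<in>arcs G. head G e' = v}. if e' = e then resH G F e w else 0)"
      by (intro sum.cong) (auto simp: emb_def resH_def lin_zero)
    also have "\<dots> = (if e \<in> {e'\<in>arcs G. head G e' = v} then resH G F e w else 0)"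
      using fin by (rule sum.delta)
    finally show ?thesis using e by auto
  next
    case False
    then show ?thesis using fdg(3)[OF G e] by (auto simp: d_h_def)
  qed
qed

lemma d_t_emb:
  assumes G: "fin_digraph G" and e: "e \<in> arcs G"
  shows "d_t G F (emb e w) = (\<lambda>v. if v = tail G e then resT G F e w else 0)"
proof
  fix v
  show "d_t G F (emb e w) v = (if v = tail G e then resT G F e w else 0)"
  proof (cases "v \<in> verts G")
    case True
    have fin: "finite {e'\<in>arcs G. tail G e' = v}" using fdg(2)[OF G] by simp
    have "d_t G F (emb e w) v = (\<Sum>e'\<in>{e'\<in>arcs G. tail G e' = v}. resT G F e' (emb e w e'))"
      using True by (simp add: d_t_def)
    also have "\<dots> = (\<Sum>e'\<in>{e'\<in>arcs G. tail G e' = v}. if e' = e then resT G F e w else 0)"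
      by (intro sum.cong) (auto simp: emb_def resT_def lin_zero)
    also have "\<dots> = (if e \<in> {e'\<in>arcs G. tail G e' = v} then resT G F e w else 0)"
      using fin by (rule sum.delta)
    finally show ?thesis using e by auto
  next
    case False
    then show ?thesis using fdg(4)[OF G e] by (auto simp: d_t_def)
  qed
qed

lemma phi_pt:
  assumes G: "fin_digraph G" and e: "e \<in> arcs G"
  shows "phi G F (e, True) = pt (head G e) (sv F (head G e)) (se F e) (sh F e) e"
    "phi G F (e, False) = pt (tail G e) (sv F (tail G e)) (se F e) (st F e) e"
  by (auto simp: fun_eq_iff phi_def pt_def d_h_emb[OF G e] d_t_emb[OF G e] resH_def resT_def)

lemma sheaf_shok:
  fixes G :: "('v,'e) pre_digraph" and F :: "('v,'e,'a::field) sheaf"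
  assumes G: "fin_digraph G"
  shows "shok (arcs G \<times> UNIV) (phi G F) (secV G F) (secE G F)"
  unfolding shok_def secV_eq secE_eq
proof (intro conjI ballI)
  show "FS.subspace (secG (verts G) (sv F))" "FS.subspace (secG (arcs G) (se F))"
    by (rule secG_subspace)+
  show "fd (secG (verts G) (sv F))" "fd (secG (arcs G) (se F))"
    using secG_dim(1) fdg(1,2)[OF G] by blast+
next
  fix k assume k: "k \<in> arcs G \<times> (UNIV :: bool set)"
  then obtain e b where eb: "k = (e, b)" "e \<in> arcs G" by auto
  show "flin (phi G F k)"
  proof (cases b)
    case True then show ?thesis using eb phi_pt(1)[OF G eb(2), of F] pt_flin by simp
  next
    case False then show ?thesis using eb phi_pt(2)[OF G eb(2), of F] pt_flin by simp
  qed
  fix x :: "'e \<Rightarrow> nat \<Rightarrow> 'a" assume "x \<in> secG (arcs G) (se F)"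
  show "phi G F k x \<in> secG (verts G) (sv F)"
  proof (cases b)
    case True then show ?thesis using eb phi_pt(1)[OF G eb(2), of F] pt_in fdg(3)[OF G eb(2)] by simp
  next
    case False then show ?thesis using eb phi_pt(2)[OF G eb(2), of F] pt_in fdg(4)[OF G eb(2)] by simp
  qed
qed

lemma ball_prod_bool: "(\<forall>k\<in>A \<times> (UNIV::bool set). P k) \<longleftrightarrow> (\<forall>e\<in>A. P (e,True) \<and> P (e,False))"
proof
  assume "\<forall>k\<in>A \<times> (UNIV::bool set). P k" then show "\<forall>e\<in>A. P (e,True) \<and> P (e,False)" by blast
next
  assume a: "\<forall>e\<in>A. P (e,True) \<and> P (e,False)"
  show "\<forall>k\<in>A \<times> (UNIV::bool set). P k"
  proof
    fix k assume "k \<in> A \<times> (UNIV::bool set)"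
    then obtain e b where "k = (e,b)" "e \<in> A" by blast
    then show "P k" using a by (cases b) auto
  qed
qed

lemma gamma_eq: "gamma_ht G F U = Gam (arcs G \<times> UNIV) (phi G F) (secE G F) U"
  unfolding gamma_ht_def Gam_def ball_prod_bool by (simp add: phi_def)

lemma max_excess_eq: "max_excess G F = ME (arcs G \<times> UNIV) (phi G F) (secV G F) (secE G F)"
  unfolding max_excess_def ME_def excess_def exc_def gamma_eq ..

lemma euler_eq:
  fixes G :: "('v,'e) pre_digraph" and F :: "('v,'e,'a::field) sheaf"
  assumes G: "fin_digraph G"
  shows "euler_char G F = int (FS.dim (secV G F)) - int (FS.dim (secE G F))"
proof -
  have h1: "FS.dim (secV G F) = (\<Sum>v\<in>verts G. sv F v)" unfolding secV_eq by (rule secG_dim(2)[OF fdg(1)[OF G]])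
  have h2: "FS.dim (secE G F) = (\<Sum>e\<in>arcs G. se F e)" unfolding secE_eq by (rule secG_dim(2)[OF fdg(2)[OF G]])
  show ?thesis unfolding euler_char_def h1 h2 ..
qed

lemma phi_res:
  assumes G: "fin_digraph G" and e: "e \<in> arcs G"
  shows "phi G F (e, True) x = (\<lambda>v. if v = head G e then resH G F e (x e) else 0)"
    "phi G F (e, False) x = (\<lambda>v. if v = tail G e then resT G F e (x e) else 0)"
  by (simp_all add: phi_def d_h_emb[OF G e] d_t_emb[OF G e])

lemma morV_abs: "morV F H a = (\<lambda>v. lin (sv H v) (sv F v) (mor_v a v))" by (simp add: fun_eq_iff morV_def)
lemma morE_abs: "morE F H a = (\<lambda>e. lin (se H e) (se F e) (mor_e a e))" by (simp add: fun_eq_iff morE_def)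

lemma mor_commute:
  fixes G :: "('v,'e) pre_digraph" and F H :: "('v,'e,'a::field) sheaf"
  assumes G: "fin_digraph G" and m: "is_sheaf_mor G F H a" and k: "k \<in> arcs G \<times> UNIV"
    and x: "x \<in> secE G F"
  shows "phi G H k (lift (arcs G) (morE F H a) x) = lift (verts G) (morV F H a) (phi G F k x)"
proof -
  obtain e b where eb: "k = (e,b)" "e \<in> arcs G" using k by auto
  have xe: "x e \<in> cspace (se F e)" using x eb(2) by (simp add: secE_def)
  have mT: "resT G H e (morE F H a e (x e)) = morV F H a (tail G e) (resT G F e (x e))"
   and mH: "resH G H e (morE F H a e (x e)) = morV F H a (head G e) (resH G F e (x e))"
    using m eb(2) xe unfolding is_sheaf_mor_def by auto
  have z: "\<And>v. morV F H a v 0 = 0" by (simp add: morV_def lin_zero)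
  have le: "lift (arcs G) (morE F H a) x e = morE F H a e (x e)" using eb(2) by (simp add: lift_apply)
  have hv: "head G e \<in> verts G" "tail G e \<in> verts G" using fdg(3,4)[OF G eb(2)] by auto
  show ?thesis
  proof (cases b)
    case True
    show ?thesis
    proof
      fix v show "phi G H k (lift (arcs G) (morE F H a) x) v = lift (verts G) (morV F H a) (phi G F k x) v"
        using eb True hv by (cases "v = head G e") (simp_all add: phi_res[OF G eb(2)] le lift_apply mH z)
    qed
  next
    case False
    show ?thesis
    proof
      fix v show "phi G H k (lift (arcs G) (morE F H a) x) v = lift (verts G) (morV F H a) (phi G F k x) v"
        using eb False hv by (cases "v = tail G e") (simp_all add: phi_res[OF G eb(2)] le lift_apply mT z)
    qed
  qed
qed

lemma morok_of_mor:
  fixes G :: "('v,'e) pre_digraph" and F H :: "('v,'e,'a::field) sheaf"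
  assumes G: "fin_digraph G" and m: "is_sheaf_mor G F H a"
  shows "morok (arcs G \<times> UNIV) (phi G F) (secV G F) (secE G F) (phi G H) (secV G H) (secE G H)
     (lift (verts G) (morV F H a)) (lift (arcs G) (morE F H a))"
  unfolding morok_def
proof (intro conjI ballI)
  show "flin (lift (verts G) (morV F H a))" unfolding morV_abs by (rule lift_flin)
  show "flin (lift (arcs G) (morE F H a))" unfolding morE_abs by (rule lift_flin)
  show "lift (verts G) (morV F H a) ` secV G F \<subseteq> secV G H" unfolding secV_eq
    by (rule lift_maps) (simp add: morV_def lin_in)
  show "lift (arcs G) (morE F H a) ` secE G F \<subseteq> secE G H" unfolding secE_eq
    by (rule lift_maps) (simp add: morE_def lin_in)
  fix k x assume "k \<in> arcs G \<times> (UNIV :: bool set)" "x \<in> secE G F"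
  then show "phi G H k (lift (arcs G) (morE F H a) x) = lift (verts G) (morV F H a) (phi G F k x)"
    by (rule mor_commute[OF G m])
qed

lemma exact_inst:
  fixes G :: "('v,'e) pre_digraph" and F1 F2 F3 :: "('v,'e,'a::field) sheaf"
  assumes G: "fin_digraph G" and ex: "short_exact G F1 F2 F3 a b"
  shows "morok (arcs G \<times> UNIV) (phi G F1) (secV G F1) (secE G F1) (phi G F2) (secV G F2) (secE G F2)
     (lift (verts G) (morV F1 F2 a)) (lift (arcs G) (morE F1 F2 a))"
   and "morok (arcs G \<times> UNIV) (phi G F2) (secV G F2) (secE G F2) (phi G F3) (secV G F3) (secE G F3)
     (lift (verts G) (morV F2 F3 b)) (lift (arcs G) (morE F2 F3 b))"
   and "exok (secV G F1) (secV G F2) (secV G F3) (lift (verts G) (morV F1 F2 a)) (lift (verts G) (morV F2 F3 b))"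
   and "exok (secE G F1) (secE G F2) (secE G F3) (lift (arcs G) (morE F1 F2 a)) (lift (arcs G) (morE F2 F3 b))"
proof -
  have m1: "is_sheaf_mor G F1 F2 a" and m2: "is_sheaf_mor G F2 F3 b"
    and eV: "\<forall>v\<in>verts G. short_exact_lin (sv F1 v) (sv F2 v) (sv F3 v) (morV F1 F2 a v) (morV F2 F3 b v)"
    and eE: "\<forall>e\<in>arcs G. short_exact_lin (se F1 e) (se F2 e) (se F3 e) (morE F1 F2 a e) (morE F2 F3 b e)"
    using ex by (auto simp: short_exact_def)
  show "morok (arcs G \<times> UNIV) (phi G F1) (secV G F1) (secE G F1) (phi G F2) (secV G F2) (secE G F2)
     (lift (verts G) (morV F1 F2 a)) (lift (arcs G) (morE F1 F2 a))" by (rule morok_of_mor[OF G m1])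
  show "morok (arcs G \<times> UNIV) (phi G F2) (secV G F2) (secE G F2) (phi G F3) (secV G F3) (secE G F3)
     (lift (verts G) (morV F2 F3 b)) (lift (arcs G) (morE F2 F3 b))" by (rule morok_of_mor[OF G m2])
  show "exok (secV G F1) (secV G F2) (secV G F3) (lift (verts G) (morV F1 F2 a)) (lift (verts G) (morV F2 F3 b))"
    unfolding secV_eq by (rule lift_exok[OF eV]) (simp add: morV_def lin_zero)
  show "exok (secE G F1) (secE G F2) (secE G F3) (lift (arcs G) (morE F1 F2 a)) (lift (arcs G) (morE F2 F3 b))"
    unfolding secE_eq by (rule lift_exok[OF eE]) (simp add: morE_def lin_zero)
qed

definition shP :: "('b \<Rightarrow> nat) \<Rightarrow> ('b \<Rightarrow> nat \<Rightarrow> 'a::field) \<Rightarrow> ('b \<Rightarrow> nat \<Rightarrow> 'a)" where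
  "shP n x = (\<lambda>b i. x b (i + n b))"

definition shJ :: "('b \<Rightarrow> nat) \<Rightarrow> ('b \<Rightarrow> nat \<Rightarrow> 'a::field) \<Rightarrow> ('b \<Rightarrow> nat \<Rightarrow> 'a)" where
  "shJ n y = (\<lambda>b i. if n b \<le> i then y b (i - n b) else 0)"

lemma shP_flin: "flin (shP n)"
  by (rule flinI) (simp_all add: shP_def fscale_def fun_eq_iff)

lemma shJ_flin: "flin (shJ n)"
  by (rule flinI) (simp_all add: shJ_def fscale_def fun_eq_iff)

lemma id_flin: "flin (\<lambda>x. x)"
  by (rule flinI) simp_all

lemma shP_shJ: "shP n (shJ n y) = y"
  by (simp add: shP_def shJ_def fun_eq_iff)

lemma shJ_maps: "y \<in> secG I n2 \<Longrightarrow> shJ n1 y \<in> secG I (\<lambda>b. n1 b + n2 b)"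
  by (auto simp: secG_iff shJ_def cspace_def)

lemma id_maps: "x \<in> secG I n1 \<Longrightarrow> x \<in> secG I (\<lambda>b. n1 b + n2 b)"
  by (auto simp: secG_iff cspace_def)

lemma split_exok:
  fixes n1 n2 :: "'b \<Rightarrow> nat"
  shows "exok (secG I n1 :: ('b \<Rightarrow> nat \<Rightarrow> 'a::field) set) (secG I (\<lambda>b. n1 b + n2 b)) (secG I n2) (\<lambda>x. x) (shP n1)"
  unfolding exok_def
proof (intro conjI)
  show "\<forall>x\<in>secG I n1. x = 0 \<longrightarrow> x = 0" by simp
  show "(\<lambda>x. x) ` (secG I n1 :: ('b \<Rightarrow> nat \<Rightarrow> 'a::field) set) = {y \<in> secG I (\<lambda>b. n1 b + n2 b). shP n1 y = 0}"
  proof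
    show "(\<lambda>x. x) ` (secG I n1 :: ('b \<Rightarrow> nat \<Rightarrow> 'a::field) set) \<subseteq> {y \<in> secG I (\<lambda>b. n1 b + n2 b). shP n1 y = 0}"
    proof
      fix y :: "'b \<Rightarrow> nat \<Rightarrow> 'a" assume "y \<in> (\<lambda>x. x) ` secG I n1"
      then have y: "y \<in> secG I n1" by simp
      have "shP n1 y = 0"
      proof (rule ext, rule ext)
        fix b i show "shP n1 y b i = 0 b i"
          using y by (cases "b \<in> I") (auto simp: shP_def secG_iff cspace_def)
      qed
      then show "y \<in> {y \<in> secG I (\<lambda>b. n1 b + n2 b). shP n1 y = 0}" using id_maps[OF y] by simp
    qed
    show "{y \<in> secG I (\<lambda>b. n1 b + n2 b). shP n1 y = 0} \<subseteq> (\<lambda>x. x) ` (secG I n1 :: ('b \<Rightarrow> nat \<Rightarrow> 'a::field) set)"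
    proof
      fix y :: "'b \<Rightarrow> nat \<Rightarrow> 'a" assume y: "y \<in> {y \<in> secG I (\<lambda>b. n1 b + n2 b). shP n1 y = 0}"
      have "\<And>b i. y b (i + n1 b) = 0"
      proof -
        fix b i
        have "shP n1 y b i = 0" using y by simp
        then show "y b (i + n1 b) = 0" by (simp add: shP_def)
      qed
      then have "\<And>b i. n1 b \<le> i \<Longrightarrow> y b i = 0" by (metis le_add_diff_inverse2)
      then have "y \<in> secG I n1" using y by (auto simp: secG_iff cspace_def)
      then show "y \<in> (\<lambda>x. x) ` secG I n1" by simp
    qed
  qed
  show "shP n1 ` secG I (\<lambda>b. n1 b + n2 b) = (secG I n2 :: ('b \<Rightarrow> nat \<Rightarrow> 'a::field) set)"
  proof
    show "shP n1 ` secG I (\<lambda>b. n1 b + n2 b) \<subseteq> (secG I n2 :: ('b \<Rightarrow> nat \<Rightarrow> 'a::field) set)"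
      by (auto simp: secG_iff shP_def cspace_def fun_eq_iff)
    show "(secG I n2 :: ('b \<Rightarrow> nat \<Rightarrow> 'a::field) set) \<subseteq> shP n1 ` secG I (\<lambda>b. n1 b + n2 b)"
    proof
      fix y :: "'b \<Rightarrow> nat \<Rightarrow> 'a" assume y: "y \<in> secG I n2"
      have "y = shP n1 (shJ n1 y)" by (simp add: shP_shJ)
      then show "y \<in> shP n1 ` secG I (\<lambda>b. n1 b + n2 b)" using shJ_maps[OF y] by blast
    qed
  qed
qed

lemma sum_split_nat: "(\<Sum>j<a+b. g j) = (\<Sum>j<a. g j) + (\<Sum>j<(b::nat). g (j + a))"
  by (induct b) (simp_all add: ac_simps)

lemma BD1:
  assumes "w \<in> cspace k1"
  shows "lin (m1 + m2) (k1 + k2) (blockdiag m1 k1 A B) w = lin m1 k1 (A :: nat \<Rightarrow> nat \<Rightarrow> 'a::field) w"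
proof
  fix i
  have w0: "\<And>j. w (j + k1) = 0" using assms by (simp add: cspace_def)
  have "(\<Sum>j<k1+k2. blockdiag m1 k1 A B i j * w j) = (\<Sum>j<k1. blockdiag m1 k1 A B i j * w j)"
    by (simp add: sum_split_nat w0)
  also have "\<dots> = (if i < m1 then (\<Sum>j<k1. A i j * w j) else 0)"
    by (auto simp: blockdiag_def intro: sum.neutral)
  finally show "lin (m1 + m2) (k1 + k2) (blockdiag m1 k1 A B) w i = lin m1 k1 A w i"
    by (simp add: lin_def)
qed

lemma BD2:
  "lin (m1 + m2) (k1 + k2) (blockdiag m1 k1 A B) w (i + m1) = lin m2 k2 (B :: nat \<Rightarrow> nat \<Rightarrow> 'a::field) (\<lambda>j. w (j + k1)) i"
proof -
  have "(\<Sum>j<k1+k2. blockdiag m1 k1 A B (i + m1) j * w j) = (\<Sum>j<k2. B i j * w (j + k1))"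
    by (simp add: sum_split_nat blockdiag_def)
  then show ?thesis by (simp add: lin_def)
qed

lemma BD3:
  "lin (m1 + m2) (k1 + k2) (blockdiag m1 k1 A B) (\<lambda>j. if k1 \<le> j then y (j - k1) else 0) i =
     (if m1 \<le> i then lin m2 k2 (B :: nat \<Rightarrow> nat \<Rightarrow> 'a::field) y (i - m1) else 0)"
proof -
  have "(\<Sum>j<k1+k2. blockdiag m1 k1 A B i j * (if k1 \<le> j then y (j - k1) else 0))
      = (\<Sum>j<k2. blockdiag m1 k1 A B i (j + k1) * y j)"
    by (simp add: sum_split_nat)
  also have "\<dots> = (if m1 \<le> i then (\<Sum>j<k2. B (i - m1) j * y j) else 0)"
    by (auto simp: blockdiag_def)
  finally show ?thesis by (auto simp: lin_def)
qed

lemma sum_sel: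
  "sv (sheaf_sum G F1 F2) = (\<lambda>v. sv F1 v + sv F2 v)"
  "se (sheaf_sum G F1 F2) = (\<lambda>e. se F1 e + se F2 e)"
  "sh (sheaf_sum G F1 F2) e = blockdiag (sv F1 (head G e)) (se F1 e) (sh F1 e) (sh F2 e)"
  "st (sheaf_sum G F1 F2) e = blockdiag (sv F1 (tail G e)) (se F1 e) (st F1 e) (st F2 e)"
  by (simp_all add: sheaf_sum_def)

lemma exok_maps: "exok S1 S2 S3 A B \<Longrightarrow> A ` S1 \<subseteq> S2 \<and> B ` S2 \<subseteq> S3"
  by (auto simp: exok_def)

lemma sum_inst:
  fixes G :: "('v,'e) pre_digraph" and F1 F2 :: "('v,'e,'a::field) sheaf"
  assumes G: "fin_digraph G"
  shows "exok (secV G F1) (secV G (sheaf_sum G F1 F2)) (secV G F2) (\<lambda>x. x) (shP (sv F1))" (is ?eV)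
    and "exok (secE G F1) (secE G (sheaf_sum G F1 F2)) (secE G F2) (\<lambda>x. x) (shP (se F1))" (is ?eE)
    and "\<forall>y\<in>secV G F2. shP (sv F1) (shJ (sv F1) y) = y"
    and "\<forall>y\<in>secE G F2. shP (se F1) (shJ (se F1) y) = y"
    and "morok (arcs G \<times> UNIV) (phi G F1) (secV G F1) (secE G F1) (phi G (sheaf_sum G F1 F2))
           (secV G (sheaf_sum G F1 F2)) (secE G (sheaf_sum G F1 F2)) (\<lambda>x. x) (\<lambda>x. x)"
    and "morok (arcs G \<times> UNIV) (phi G (sheaf_sum G F1 F2)) (secV G (sheaf_sum G F1 F2)) (secE G (sheaf_sum G F1 F2))
           (phi G F2) (secV G F2) (secE G F2) (shP (sv F1)) (shP (se F1))"
    and "morok (arcs G \<times> UNIV) (phi G F2) (secV G F2) (secE G F2) (phi G (sheaf_sum G F1 F2))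
           (secV G (sheaf_sum G F1 F2)) (secE G (sheaf_sum G F1 F2)) (shJ (sv F1)) (shJ (se F1))"
proof -
  let ?S = "sheaf_sum G F1 F2"
  show eV: ?eV unfolding secV_eq sum_sel by (rule split_exok)
  show eE: ?eE unfolding secE_eq sum_sel by (rule split_exok)
  show "\<forall>y\<in>secV G F2. shP (sv F1) (shJ (sv F1) y) = y" by (simp add: shP_shJ)
  show "\<forall>y\<in>secE G F2. shP (se F1) (shJ (se F1) y) = y" by (simp add: shP_shJ)
  have mV: "(\<lambda>x. x) ` secV G F1 \<subseteq> secV G ?S" "shP (sv F1) ` secV G ?S \<subseteq> secV G F2" using exok_maps[OF eV] by auto
  have mE: "(\<lambda>x. x) ` secE G F1 \<subseteq> secE G ?S" "shP (se F1) ` secE G ?S \<subseteq> secE G F2" using exok_maps[OF eE] by auto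
  have jV: "shJ (sv F1) ` secV G F2 \<subseteq> secV G ?S" unfolding secV_eq sum_sel using shJ_maps by blast
  have jE: "shJ (se F1) ` secE G F2 \<subseteq> secE G ?S" unfolding secE_eq sum_sel using shJ_maps by blast
  show "morok (arcs G \<times> UNIV) (phi G F1) (secV G F1) (secE G F1) (phi G ?S) (secV G ?S) (secE G ?S) (\<lambda>x. x) (\<lambda>x. x)"
    unfolding morok_def
  proof (intro conjI ballI)
    show "flin (\<lambda>x::'v \<Rightarrow> nat \<Rightarrow> 'a. x)" "flin (\<lambda>x::'e \<Rightarrow> nat \<Rightarrow> 'a. x)" by (rule id_flin)+
    show "(\<lambda>x. x) ` secV G F1 \<subseteq> secV G ?S" "(\<lambda>x. x) ` secE G F1 \<subseteq> secE G ?S" using mV mE by auto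
    fix k and x :: "'e \<Rightarrow> nat \<Rightarrow> 'a" assume k: "k \<in> arcs G \<times> (UNIV :: bool set)" and x: "x \<in> secE G F1"
    obtain e b where eb: "k = (e,b)" "e \<in> arcs G" using k by auto
    have xe: "x e \<in> cspace (se F1 e)" using x eb(2) by (simp add: secE_def)
    have h1: "resH G ?S e (x e) = resH G F1 e (x e)" unfolding resH_def sum_sel by (rule BD1[OF xe])
    have h2: "resT G ?S e (x e) = resT G F1 e (x e)" unfolding resT_def sum_sel by (rule BD1[OF xe])
    show "phi G ?S k x = phi G F1 k x"
    proof (cases b)
      case True then have kk: "k = (e, True)" using eb(1) by simp
      show ?thesis unfolding kk phi_res[OF G eb(2)] h1 by (rule refl)
    next
      case False then have kk: "k = (e, False)" using eb(1) by simp
      show ?thesis unfolding kk phi_res[OF G eb(2)] h2 by (rule refl)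
    qed
  qed
  show "morok (arcs G \<times> UNIV) (phi G ?S) (secV G ?S) (secE G ?S) (phi G F2) (secV G F2) (secE G F2) (shP (sv F1)) (shP (se F1))"
    unfolding morok_def
  proof (intro conjI ballI)
    show "flin (shP (sv F1) :: _ \<Rightarrow> 'v \<Rightarrow> nat \<Rightarrow> 'a)" "flin (shP (se F1) :: _ \<Rightarrow> 'e \<Rightarrow> nat \<Rightarrow> 'a)" by (rule shP_flin)+
    show "shP (sv F1) ` secV G ?S \<subseteq> secV G F2" "shP (se F1) ` secE G ?S \<subseteq> secE G F2" using mV mE by auto
    fix k and x :: "'e \<Rightarrow> nat \<Rightarrow> 'a" assume k: "k \<in> arcs G \<times> (UNIV :: bool set)" and x: "x \<in> secE G ?S"
    obtain e b where eb: "k = (e,b)" "e \<in> arcs G" using k by auto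
    show "phi G F2 k (shP (se F1) x) = shP (sv F1) (phi G ?S k x)"
    proof (rule ext, rule ext)
      fix v i
      show "phi G F2 k (shP (se F1) x) v i = shP (sv F1) (phi G ?S k x) v i"
        using eb by (cases b) (simp_all add: phi_res[OF G eb(2)] resH_def resT_def sum_sel BD2 shP_def)
    qed
  qed
  show "morok (arcs G \<times> UNIV) (phi G F2) (secV G F2) (secE G F2) (phi G ?S) (secV G ?S) (secE G ?S) (shJ (sv F1)) (shJ (se F1))"
    unfolding morok_def
  proof (intro conjI ballI)
    show "flin (shJ (sv F1) :: _ \<Rightarrow> 'v \<Rightarrow> nat \<Rightarrow> 'a)" "flin (shJ (se F1) :: _ \<Rightarrow> 'e \<Rightarrow> nat \<Rightarrow> 'a)" by (rule shJ_flin)+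
    show "shJ (sv F1) ` secV G F2 \<subseteq> secV G ?S" "shJ (se F1) ` secE G F2 \<subseteq> secE G ?S" using jV jE by auto
    fix k and x :: "'e \<Rightarrow> nat \<Rightarrow> 'a" assume k: "k \<in> arcs G \<times> (UNIV :: bool set)" and x: "x \<in> secE G F2"
    obtain e b where eb: "k = (e,b)" "e \<in> arcs G" using k by auto
    show "phi G ?S k (shJ (se F1) x) = shJ (sv F1) (phi G F2 k x)"
    proof (rule ext, rule ext)
      fix v i
      show "phi G ?S k (shJ (se F1) x) v i = shJ (sv F1) (phi G F2 k x) v i"
        using eb by (cases b) (simp_all add: phi_res[OF G eb(2)] resH_def resT_def sum_sel BD3 shJ_def)
    qed
  qed
qed

theorem theorem1p5:
  fixes G :: "('v,'e) pre_digraph"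
  assumes "fin_digraph G"
  shows "(\<forall>F :: ('v,'e,'a::field) sheaf. 0 \<le> alpha0 G F \<and> 0 \<le> alpha1 G F)
    \<and> (\<forall>F1 F2 :: ('v,'e,'a) sheaf.
         alpha0 G (sheaf_sum G F1 F2) = alpha0 G F1 + alpha0 G F2 \<and>
         alpha1 G (sheaf_sum G F1 F2) = alpha1 G F1 + alpha1 G F2)
    \<and> (\<forall>(F1 :: ('v,'e,'a) sheaf) F2 F3 a b. short_exact G F1 F2 F3 a b \<longrightarrow>
         triangular [0, alpha1 G F1, alpha1 G F2, alpha1 G F3,
                        alpha0 G F1, alpha0 G F2, alpha0 G F3, 0])"
proof -
  have G: "fin_digraph G" by fact
  let ?K = "arcs G \<times> (UNIV :: bool set)"
  have sh: "\<And>F :: ('v,'e,'a) sheaf. shok ?K (phi G F) (secV G F) (secE G F)" by (rule sheaf_shok[OF G])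
  have a1: "\<And>F :: ('v,'e,'a) sheaf. alpha1 G F = ME ?K (phi G F) (secV G F) (secE G F)"
    by (simp add: alpha1_def max_excess_eq)
  have a0: "\<And>F :: ('v,'e,'a) sheaf. alpha0 G F = int (FS.dim (secV G F)) - int (FS.dim (secE G F)) + ME ?K (phi G F) (secV G F) (secE G F)"
    by (simp add: alpha0_def max_excess_eq euler_eq[OF G])
  have P1: "\<forall>F :: ('v,'e,'a) sheaf. 0 \<le> alpha0 G F \<and> 0 \<le> alpha1 G F"
  proof
    fix F :: "('v,'e,'a) sheaf"
    show "0 \<le> alpha0 G F \<and> 0 \<le> alpha1 G F"
      using ME_nonneg[OF sh[of F]] ME_lower[OF sh[of F]] a0[of F] a1[of F] by linarith
  qed
  have P2: "\<forall>F1 F2 :: ('v,'e,'a) sheaf.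
         alpha0 G (sheaf_sum G F1 F2) = alpha0 G F1 + alpha0 G F2 \<and>
         alpha1 G (sheaf_sum G F1 F2) = alpha1 G F1 + alpha1 G F2"
  proof (intro allI)
    fix F1 F2 :: "('v,'e,'a) sheaf"
    let ?S = "sheaf_sum G F1 F2"
    note si = sum_inst[OF G, where ?F1.0 = F1 and ?F2.0 = F2]
    have le: "ME ?K (phi G ?S) (secV G ?S) (secE G ?S) \<le> ME ?K (phi G F1) (secV G F1) (secE G F1) + ME ?K (phi G F2) (secV G F2) (secE G F2)"
      by (rule me_sub[OF sh sh sh si(5) si(6) si(1) si(2)])
    have ge: "ME ?K (phi G F1) (secV G F1) (secE G F1) + ME ?K (phi G F2) (secV G F2) (secE G F2) \<le> ME ?K (phi G ?S) (secV G ?S) (secE G ?S)"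
      by (rule me_split[OF sh sh sh si(5) si(6) si(1) si(2) si(7) si(3) si(4)])
    have eu: "euler_char G ?S = euler_char G F1 + euler_char G F2"
      unfolding euler_char_def sum_sel by (simp add: sum.distrib)
    show "alpha0 G ?S = alpha0 G F1 + alpha0 G F2 \<and> alpha1 G ?S = alpha1 G F1 + alpha1 G F2"
      using le ge eu unfolding alpha0_def alpha1_def max_excess_eq by linarith
  qed
  have P3: "\<forall>(F1 :: ('v,'e,'a) sheaf) F2 F3 a b. short_exact G F1 F2 F3 a b \<longrightarrow>
         triangular [0, alpha1 G F1, alpha1 G F2, alpha1 G F3,
                        alpha0 G F1, alpha0 G F2, alpha0 G F3, 0]"
  proof (intro allI impI)
    fix F1 F2 F3 :: "('v,'e,'a) sheaf" and a b
    assume ex: "short_exact G F1 F2 F3 a b"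
    note ei = exact_inst[OF G ex]
    have iV: "\<forall>x\<in>secV G F1. lift (verts G) (morV F1 F2 a) x = 0 \<longrightarrow> x = 0" using ei(3) by (simp add: exok_def)
    have iE: "\<forall>x\<in>secE G F1. lift (arcs G) (morE F1 F2 a) x = 0 \<longrightarrow> x = 0" using ei(4) by (simp add: exok_def)
    have m12: "ME ?K (phi G F1) (secV G F1) (secE G F1) \<le> ME ?K (phi G F2) (secV G F2) (secE G F2)"
      by (rule me_mono[OF sh sh ei(1) iV iE])
    have m2: "ME ?K (phi G F2) (secV G F2) (secE G F2) \<le> ME ?K (phi G F1) (secV G F1) (secE G F1) + ME ?K (phi G F3) (secV G F3) (secE G F3)"
      by (rule me_sub[OF sh sh sh ei(1) ei(2) ei(3) ei(4)])
    have m3: "ME ?K (phi G F3) (secV G F3) (secE G F3) \<le> ME ?K (phi G F2) (secV G F2) (secE G F2) + int (FS.dim (secV G F1)) - int (FS.dim (secE G F1))"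
      by (rule me_quot[OF sh sh sh ei(1) ei(2) ei(3) ei(4)])
    have lA: "flin (lift (verts G) (morV F1 F2 a))" "flin (lift (arcs G) (morE F1 F2 a))"
      using ei(1) by (simp_all add: morok_def)
    have lB: "flin (lift (verts G) (morV F2 F3 b))" "flin (lift (arcs G) (morE F2 F3 b))"
      using ei(2) by (simp_all add: morok_def)
    have s1: "FS.subspace (secV G F1)" "fd (secV G F1)" "FS.subspace (secE G F1)" "fd (secE G F1)"
      using sh[of F1] by (simp_all add: shok_def)
    have s2: "FS.subspace (secV G F2)" "fd (secV G F2)" "FS.subspace (secE G F2)" "fd (secE G F2)"
      using sh[of F2] by (simp_all add: shok_def)
    have dV: "FS.dim (secV G F2) = FS.dim (secV G F1) + FS.dim (secV G F3)"
      by (rule dim_add[OF ei(3) lA(1) lB(1) s1(1,2) s2(1,2)])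
    have dE: "FS.dim (secE G F2) = FS.dim (secE G F1) + FS.dim (secE G F3)"
      by (rule dim_add[OF ei(4) lA(2) lB(2) s1(3,4) s2(3,4)])
    have n1: "0 \<le> alpha0 G F1" "0 \<le> alpha1 G F1" using P1 by blast+
    have n2: "0 \<le> alpha0 G F2" "0 \<le> alpha1 G F2" using P1 by blast+
    have n3: "0 \<le> alpha0 G F3" "0 \<le> alpha1 G F3" using P1 by blast+
    note facts = m12 m2 m3 dV dE n1 n2 n3 a0[of F1] a0[of F2] a0[of F3] a1[of F1] a1[of F2] a1[of F3]
    show "triangular [0, alpha1 G F1, alpha1 G F2, alpha1 G F3,
                        alpha0 G F1, alpha0 G F2, alpha0 G F3, 0]"
      unfolding triangular_def
    proof (intro allI impI)
      fix i assume i: "0 < i \<and> i + 1 < length [0, alpha1 G F1, alpha1 G F2, alpha1 G F3,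
                        alpha0 G F1, alpha0 G F2, alpha0 G F3, 0]"
      then have "i = 1 \<or> i = 2 \<or> i = 3 \<or> i = 4 \<or> i = 5 \<or> i = 6" by auto
      then show "[0, alpha1 G F1, alpha1 G F2, alpha1 G F3, alpha0 G F1, alpha0 G F2, alpha0 G F3, 0] ! i
          \<le> [0, alpha1 G F1, alpha1 G F2, alpha1 G F3, alpha0 G F1, alpha0 G F2, alpha0 G F3, 0] ! (i - 1) +
             [0, alpha1 G F1, alpha1 G F2, alpha1 G F3, alpha0 G F1, alpha0 G F2, alpha0 G F3, 0] ! (i + 1)"
        using facts by (elim disjE) (simp_all add: eval_nat_numeral)
    qed
  qed
  show ?thesis using P1 P2 P3 by blast
qed

end
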